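(* Let $\lambda$ be a partition with 2-core $(k,k-1,\dots,1)$ (with $k\ge0$) and 2-quotient $(\mu,\nu)$, and let $\alpha_k=-\tfrac12-\ell(\mu)+\ell(\nu)-k$. Then $$R_\lambda(x)=2^{|\mu|+|\nu|}\,\hat L^{(\alpha_k)}_{\mu,\nu}\!\left(\frac{x}{2}\right),\qquad\text{equivalently}\qquad \mathrm{He}_\lambda(x)=2^{|\mu|+|\nu|}x^{k(k+1)/2}\,\hat L^{(\alpha_k)}_{\mu,\nu}\!\left(\frac{x^2}{2}\right).$$
   Context: Partitions $\lambda=(\lambda_1\ge\dots\ge\lambda_{\ell(\lambda)}>0)$, degree vector $n_i=\lambda_i+\ell(\lambda)-i$, $\Delta(n_\lambda)=\prod_{i<j}(n_j-n_i)$. Hermite: $\mathrm{He}_0=1,\mathrm{He}_1=x,\mathrm{He}_n=x\mathrm{He}_{n-1}-(n-1)\mathrm{He}_{n-2}$; $\mathrm{He}_\lambda=\mathrm{Wr}[\mathrm{He}_{n_1},\dots,\mathrm{He}_{n_{\ell(\lambda)}}]/\Delta(n_\lambda)$. Maya diagram: a set $M\subset\mathbb{Z}$ containing all sufficiently negative integers and finitely many non-negative ones; $\lambda(M)$ has parts the positive values of $\#\{n\notin M:n<m\}$, $m\in M$. $M_\lambda=\{n<0\}\cup\{n_i\}$, $M_\lambda+t=\{m+t:m\in M_\lambda\}$. For partitions $\mu,\nu$ and $k\in\mathbb{Z}$ choose $s,s'\ge0$ with $\ell(\nu)+s'-\ell(\mu)-s=k$ and set $\Phi(\mu,\nu,k)=\lambda(\{2m:m\in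 M_\mu+s\}\cup\{2m+1:m\in M_\nu+s'\})$. Each partition is uniquely $\Phi(\mu,\nu,k)$ with $k\ge0$; $(\mu,\nu)$ is its 2-quotient, $(k,\dots,1)$ its 2-core. $R_\lambda$ is the polynomial with $\mathrm{He}_\lambda(x)=x^{k(k+1)/2}R_\lambda(x^2)$. Laguerre: $\hat L_n^{(\alpha)}(x)=(-1)^n n!\,L_n^{(\alpha)}(x)$ (monic), with $L_n^{(\alpha)}$ the classical Laguerre polynomial. For partitions $\mu,\nu$ with degree vectors $n_\mu=(n_1,\dots,n_{\ell(\mu)})$, $m_\nu=(m_1,\dots,m_{\ell(\nu)})$ and $\alpha\in\mathbb{R}$ such that $n_1,\dots,n_{\ell(\mu)},m_1-\alpha,\dots,m_{\ell(\nu)}-\alpha$ are pairwise distinct, $$\hat L^{(\alpha)}_{\mu,\nu}(x)=\frac{x^{(\ell(\mu)+\alpha)\ell(\nu)}}{\Delta(n_\mu,m_\nu-\alpha)}\mathrm{Wr}\big[\hat L^{(\alpha)}_{n_1},\dots,\hat L^{(\alpha)}_{n_{\ell(\mu)}},x^{-\alpha}\hat L^{(-\alpha)}_{m_1},\dots,x^{-\alpha}\hat L^{(-\alpha)}_{m_{\ell(\nu)}}\big],$$ where $\Delta(n_\mu,m_\nu-\alpha)$ is the Vandermonde determinant (product of $(y_j-y_i)$ over $i<j$) of the list $(n_1,\dots,n_{\ell(\mu)},m_1-\alpha,\dots,m_{\ell(\nu)}-\alpha)$; this is a monic polynomial of degree $|\mu|+|\nu|$. *)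

theory Defs
  imports "HOL-Analysis.Analysis" "HOL-Computational_Algebra.Polynomial"
begin

definition is_partition :: "nat list \<Rightarrow> bool" where
  "is_partition lam \<longleftrightarrow> sorted_wrt (\<ge>) lam \<and> (\<forall>p\<in>set lam. 0 < p)"

definition psize :: "nat list \<Rightarrow> nat" where
  "psize lam = sum_list lam"

text \<open>Degree vector n_i = lam_i + l(lam) - i (i = 1..l), here 0-indexed.\<close>
definition degvec :: "nat list \<Rightarrow> nat list" where
  "degvec lam = map (\<lambda>i. lam ! i + length lam - 1 - i) [0..<length lam]"

definition vandermonde :: "real list \<Rightarrow> real" where
  "vandermonde ys = (\<Prod>j<length ys. \<Prod>i<j. ys ! j - ys ! i)"

definition ldet :: "nat \<Rightarrow> (nat \<Rightarrow> nat \<Rightarrow> 'a::comm_ring_1) \<Rightarrow> 'a" where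
  "ldet n A = (\<Sum>p | p permutes {..<n}. of_int (sign p) * (\<Prod>i<n. A i (p i)))"

fun He :: "nat \<Rightarrow> real poly" where
  "He 0 = 1"
| "He (Suc 0) = [:0, 1:]"
| "He (Suc (Suc n)) = [:0, 1:] * He (Suc n) - smult (real (Suc n)) (He n)"

definition poly_wronskian :: "real poly list \<Rightarrow> real poly" where
  "poly_wronskian ps = ldet (length ps) (\<lambda>i j. (pderiv ^^ i) (ps ! j))"

definition He_part :: "nat list \<Rightarrow> real poly" where
  "He_part lam = smult (1 / vandermonde (map real (degvec lam)))
                   (poly_wronskian (map He (degvec lam)))"

definition maya :: "nat list \<Rightarrow> int set" where
  "maya lam = {n. n < 0} \<union> int ` set (degvec lam)"

definition maya_shift :: "int set \<Rightarrow> int \<Rightarrow> int set" where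
  "maya_shift M t = (\<lambda>m. m + t) ` M"

definition maya_count :: "int set \<Rightarrow> int \<Rightarrow> nat" where
  "maya_count M m = card {n. n \<notin> M \<and> n < m}"

definition partition_of_maya :: "int set \<Rightarrow> nat list" where
  "partition_of_maya M =
     rev (sort (map (maya_count M)
       (sorted_list_of_set {m \<in> M. 0 < maya_count M m})))"

text \<open>Phi(mu,nu,k), with a canonical choice of s, s' >= 0 such that
  l(nu) + s' - l(mu) - s = k.\<close>
definition Phi :: "nat list \<Rightarrow> nat list \<Rightarrow> int \<Rightarrow> nat list" where
  "Phi mu nu k =
    (let d = k + int (length mu) - int (length nu);
         s = (if d \<ge> 0 then 0 else - d);
         s' = (if d \<ge> 0 then d else 0)
     in partition_of_maya
          ((\<lambda>m. 2 * m) ` maya_shift (maya mu) s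
           \<union> (\<lambda>m. 2 * m + 1) ` maya_shift (maya nu) s'))"

definition laguerre :: "nat \<Rightarrow> real \<Rightarrow> real poly" where
  "laguerre n a = (\<Sum>i\<le>n. monom ((-1) ^ i * ((real n + a) gchoose (n - i)) / fact i) i)"

text \<open>Monic Laguerre polynomial (-1)^n n! L_n^(a).\<close>
definition laguerre_hat :: "nat \<Rightarrow> real \<Rightarrow> real poly" where
  "laguerre_hat n a = smult ((-1) ^ n * fact n) (laguerre n a)"

definition wronskian :: "(real \<Rightarrow> real) list \<Rightarrow> real \<Rightarrow> real" where
  "wronskian fs x = ldet (length fs) (\<lambda>i j. (deriv ^^ i) (fs ! j) x)"

text \<open>hat L^(a)_{mu,nu}(x), for x > 0.\<close>
definition laguerre_pair :: "real \<Rightarrow> nat list \<Rightarrow> nat list \<Rightarrow> real \<Rightarrow> real" where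
  "laguerre_pair a mu nu x =
     x powr ((real (length mu) + a) * real (length nu))
     / vandermonde (map real (degvec mu) @ map (\<lambda>m. real m - a) (degvec nu))
     * wronskian (map (\<lambda>n. poly (laguerre_hat n a)) (degvec mu)
                  @ map (\<lambda>m y. y powr (- a) * poly (laguerre_hat m (- a)) y) (degvec nu)) x"

end

theory Submission
  imports Defs "Jordan_Normal_Form.Determinant"
begin

hide_const (open) module.smult


lemma ldet_det: "ldet n A = Determinant.det (mat n n (\<lambda>(i,j). A i j))"
  unfolding ldet_def Determinant.det_def by (auto simp: atLeast0LessThan intro!: sum.cong prod.cong)

lemma ldet_cong: "(\<And>i j. i < n \<Longrightarrow> j < n \<Longrightarrow> A i j = B i j) \<Longrightarrow> ldet n A = ldet n B"
  unfolding ldet_def by (intro sum.cong refl arg_cong2[where f="(*)"] prod.cong) (auto simp: permutes_def)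

lemma ldet_perm_cols:
  assumes "\<sigma> permutes {..<n}"
  shows "ldet n (\<lambda>i j. A i (\<sigma> j)) = of_int (sign \<sigma>) * ldet n A"
proof -
  let ?A = "mat n n (\<lambda>(i,j). A i j)"
  have s: "\<sigma> permutes {0..<n}" using assms by (simp add: atLeast0LessThan)
  have "ldet n (\<lambda>i j. A i (\<sigma> j)) = Determinant.det (mat n n (\<lambda>(i,j). A i (\<sigma> j)))"
    by (rule ldet_det)
  also have "\<dots> = Determinant.det (transpose_mat (mat n n (\<lambda>(i,j). A i (\<sigma> j))))"
    by (rule det_transpose[symmetric]) auto
  also have "transpose_mat (mat n n (\<lambda>(i,j). A i (\<sigma> j))) = mat n n (\<lambda>(i,j). transpose_mat ?A $$ (\<sigma> i, j))"
  proof (rule eq_matI)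
    fix i j assume "i < dim_row (mat n n (\<lambda>(i,j). transpose_mat ?A $$ (\<sigma> i, j)))" "j < dim_col (mat n n (\<lambda>(i,j). transpose_mat ?A $$ (\<sigma> i, j)))"
    then have ij: "i < n" "j < n" by auto
    then have "\<sigma> i < n" using permutes_in_image[OF assms] by auto
    then show "transpose_mat (mat n n (\<lambda>(i,j). A i (\<sigma> j))) $$ (i,j) = mat n n (\<lambda>(i,j). transpose_mat ?A $$ (\<sigma> i, j)) $$ (i,j)"
      using ij by simp
  qed auto
  also have "Determinant.det \<dots> = of_int (sign \<sigma>) * Determinant.det (transpose_mat ?A)"
    by (rule det_permute_rows[OF _ s]) auto
  also have "Determinant.det (transpose_mat ?A) = Determinant.det ?A"
    by (rule det_transpose) auto
  finally show ?thesis by (simp add: ldet_det)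
qed

lemma ldet_col_scale:
  "ldet n (\<lambda>i j. c j * A i j) = (\<Prod>j<n. c j) * ldet n A"
proof -
  have "(\<Prod>i<n. c (p i) * A i (p i)) = (\<Prod>j<n. c j) * (\<Prod>i<n. A i (p i))" if "p permutes {..<n}" for p
  proof -
    have "(\<Prod>i<n. c (p i)) = (\<Prod>j<n. c j)"
      using prod.permute[OF that, of c] by (simp add: comp_def)
    then show ?thesis by (simp add: prod.distrib)
  qed
  then show ?thesis unfolding ldet_def by (simp add: sum_distrib_left algebra_simps)
qed

lemma ldet_row_scale:
  "ldet n (\<lambda>i j. c i * A i j) = (\<Prod>i<n. c i) * ldet n A"
  unfolding ldet_def by (simp add: sum_distrib_left algebra_simps prod.distrib)

lemma ldet_lower_transform:
  fixes A B C :: "nat \<Rightarrow> nat \<Rightarrow> 'a::comm_ring_1"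
  assumes "\<And>i j. i < n \<Longrightarrow> j < n \<Longrightarrow> B i j = (\<Sum>l\<le>i. C i l * A l j)"
  shows "ldet n B = (\<Prod>i<n. C i i) * ldet n A"
proof -
  let ?C = "mat n n (\<lambda>(i,l). if l \<le> i then C i l else 0)"
  let ?A = "mat n n (\<lambda>(i,j). A i j)"
  have eq: "mat n n (\<lambda>(i,j). B i j) = ?C * ?A"
  proof (rule eq_matI)
    fix i j assume i: "i < dim_row (?C * ?A)" and j: "j < dim_col (?C * ?A)"
    then have i: "i < n" and j: "j < n" by auto
    have "(?C * ?A) $$ (i,j) = (\<Sum>l = 0..<n. (if l \<le> i then C i l else 0) * A l j)"
      using i j by (simp add: scalar_prod_def)
    also have "\<dots> = (\<Sum>l\<in>{..i}. C i l * A l j)"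
      using i by (intro sum.mono_neutral_cong_right) auto
    finally show "mat n n (\<lambda>(i,j). B i j) $$ (i,j) = (?C * ?A) $$ (i,j)"
      using i j assms by simp
  qed auto
  have "Determinant.det ?C = prod_list (diag_mat ?C)"
    by (rule det_lower_triangular[of n]) auto
  also have "\<dots> = (\<Prod>i<n. C i i)"
    by (simp add: prod_list_diag_prod atLeast0LessThan)
  finally have dc: "Determinant.det ?C = (\<Prod>i<n. C i i)" .
  show ?thesis using det_mult[of ?C n ?A] eq dc by (simp add: ldet_det)
qed

lemma ldet_unit_col:
  fixes A :: "nat \<Rightarrow> nat \<Rightarrow> 'a::comm_ring_1"
  assumes "A 0 0 = 1" "\<And>i. 0 < i \<Longrightarrow> i \<le> n \<Longrightarrow> A i 0 = 0"
  shows "ldet (Suc n) A = ldet n (\<lambda>i j. A (Suc i) (Suc j))"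
proof -
  let ?A = "mat (Suc n) (Suc n) (\<lambda>(i,j). A i j)"
  have "Determinant.det ?A = (\<Sum>i<Suc n. ?A $$ (i,0) * cofactor ?A i 0)"
    by (rule laplace_expansion_column) auto
  also have "\<dots> = cofactor ?A 0 0"
    by (subst sum.lessThan_Suc_shift) (use assms in auto)
  also have "\<dots> = Determinant.det (mat n n (\<lambda>(i,j). A (Suc i) (Suc j)))"
    unfolding cofactor_def mat_delete_def by (auto intro!: arg_cong[where f=Determinant.det] eq_matI)
  finally show ?thesis by (simp add: ldet_det)
qed

lemma ldet_permute_list:
  assumes "mset xs = mset ys"
  shows "\<exists>s. \<forall>F. ldet (length ys) (\<lambda>i j. F i (ys ! j)) = of_int s * ldet (length xs) (\<lambda>i j. F i (xs ! j))"
proof -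
  obtain p where p: "p permutes {..<length xs}" "permute_list p xs = ys"
    using mset_eq_permutation[of ys xs] assms by metis
  have len: "length ys = length xs" using p(2) by (metis length_permute_list)
  have "ldet (length ys) (\<lambda>i j. F i (ys ! j)) = of_int (sign p) * ldet (length xs) (\<lambda>i j. F i (xs ! j))" for F
  proof -
    have "ldet (length ys) (\<lambda>i j. F i (ys ! j)) = ldet (length xs) (\<lambda>i j. F i (xs ! p j))"
      unfolding len
    proof (rule ldet_cong)
      fix i j assume "i < length xs" "j < length xs"
      then show "F i (ys ! j) = F i (xs ! p j)" using p(2)[symmetric] p(1) by (simp add: permute_list_nth)
    qed
    also have "\<dots> = of_int (sign p) * ldet (length xs) (\<lambda>i j. F i (xs ! j))"
      by (rule ldet_perm_cols[OF p(1), of "\<lambda>i j. F i (xs ! j)"])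
    finally show ?thesis .
  qed
  then show ?thesis by blast
qed


lemma vandermonde_Cons:
  "vandermonde (y0 # ys) = (\<Prod>j<length ys. ys ! j - y0) * vandermonde ys"
proof -
  have "vandermonde (y0 # ys) = (\<Prod>j<Suc (length ys). \<Prod>i<j. (y0 # ys) ! j - (y0 # ys) ! i)"
    by (simp add: vandermonde_def)
  also have "\<dots> = (\<Prod>j<length ys. \<Prod>i<Suc j. (y0 # ys) ! Suc j - (y0 # ys) ! i)"
    by (subst prod.lessThan_Suc_shift) simp
  also have "\<dots> = (\<Prod>j<length ys. (ys ! j - y0) * (\<Prod>i<j. ys ! j - ys ! i))"
    by (intro prod.cong refl, subst prod.lessThan_Suc_shift) simp
  also have "\<dots> = (\<Prod>j<length ys. ys ! j - y0) * vandermonde ys"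
    by (simp add: vandermonde_def prod.distrib)
  finally show ?thesis .
qed

lemma vandermonde_det: "vandermonde ys = ldet (length ys) (\<lambda>i j. (ys ! j) ^ i)"
proof (induction ys)
  case Nil
  then show ?case by (simp add: vandermonde_def ldet_def)
next
  case (Cons y0 zs)
  let ?n = "length zs"
  let ?A = "\<lambda>i j. ((y0 # zs) ! j) ^ i"
  let ?C = "\<lambda>i l. if l = i then 1 else if Suc l = i then - y0 else (0::real)"
  let ?B = "\<lambda>i j. if i = 0 then 1 else ((y0 # zs) ! j) ^ (i - 1) * ((y0 # zs) ! j - y0)"
  have B: "?B i j = (\<Sum>l\<le>i. ?C i l * ?A l j)" for i j
  proof (cases i)
    case 0 then show ?thesis by simp
  next
    case (Suc i')
    have "(\<Sum>l\<le>i. ?C i l * ?A l j) = (\<Sum>l\<in>{i', i}. ?C i l * ?A l j)"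
      by (rule sum.mono_neutral_right) (auto simp: Suc)
    also have "\<dots> = ?A i j - y0 * ?A i' j" using Suc by simp
    finally show ?thesis using Suc by (simp add: algebra_simps)
  qed
  have "ldet (Suc ?n) ?B = (\<Prod>i<Suc ?n. ?C i i) * ldet (Suc ?n) ?A"
    by (rule ldet_lower_transform) (use B in auto)
  then have "ldet (Suc ?n) ?A = ldet (Suc ?n) ?B" by simp
  also have "\<dots> = ldet ?n (\<lambda>i j. ?B (Suc i) (Suc j))"
    by (rule ldet_unit_col) auto
  also have "\<dots> = ldet ?n (\<lambda>i j. (zs ! j - y0) * (zs ! j) ^ i)"
    by (intro ldet_cong) (simp add: mult.commute)
  also have "\<dots> = (\<Prod>j<?n. zs ! j - y0) * ldet ?n (\<lambda>i j. (zs ! j) ^ i)"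
    by (rule ldet_col_scale)
  finally show ?case using Cons by (simp add: vandermonde_Cons)
qed

lemma wr_ratio_perm:
  fixes E :: "nat \<Rightarrow> 'b \<Rightarrow> real"
  assumes "mset xs = mset ys"
  shows "ldet (length ys) (\<lambda>i j. E i (ys ! j)) / vandermonde (map v ys)
       = ldet (length xs) (\<lambda>i j. E i (xs ! j)) / vandermonde (map v xs)"
proof -
  obtain p where p: "p permutes {..<length xs}" "permute_list p xs = ys"
    using mset_eq_permutation[of ys xs] assms by metis
  have len: "length ys = length xs" using p(2) by (metis length_permute_list)
  have *: "ldet (length ys) (\<lambda>i j. F i (ys ! j)) = of_int (sign p) * ldet (length xs) (\<lambda>i j. F i (xs ! j))"
    for F :: "nat \<Rightarrow> 'b \<Rightarrow> real"
  proof -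
    have "ldet (length ys) (\<lambda>i j. F i (ys ! j)) = ldet (length xs) (\<lambda>i j. F i (xs ! p j))"
      unfolding len
    proof (rule ldet_cong)
      fix i j assume "i < length xs" "j < length xs"
      then show "F i (ys ! j) = F i (xs ! p j)" using p(2)[symmetric] p(1) by (simp add: permute_list_nth)
    qed
    also have "\<dots> = of_int (sign p) * ldet (length xs) (\<lambda>i j. F i (xs ! j))"
      by (rule ldet_perm_cols[OF p(1), of "\<lambda>i j. F i (xs ! j)"])
    finally show ?thesis .
  qed
  have v: "vandermonde (map v zs) = ldet (length zs) (\<lambda>i j. (v (zs ! j)) ^ i)" for zs
    unfolding vandermonde_det length_map by (rule ldet_cong) simp
  have s: "(of_int (sign p) :: real) \<noteq> 0" by simp
  show ?thesis unfolding v * [of E] * [of "\<lambda>i x. v x ^ i"] using s by simp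
qed

lemma vandermonde_translate: "vandermonde (map (\<lambda>y. y + c) ys) = vandermonde ys"
  by (simp add: vandermonde_def)

lemma double_sum_lessThan: "2 * (\<Sum>j<n. j) = n * (n - 1::nat)"
proof (induction n)
  case (Suc n)
  have "2 * (\<Sum>j<Suc n. j) = n * (n - 1) + 2 * n" using Suc by simp
  also have "\<dots> = Suc n * (Suc n - 1)" by (cases n) auto
  finally show ?case .
qed simp

lemma sum_lessThan_id: "(\<Sum>j<n. j) = n * (n - 1::nat) div 2"
  using double_sum_lessThan[of n] by simp

lemma vandermonde_scale: "vandermonde (map (\<lambda>y. c * y) ys) = c ^ (length ys * (length ys - 1) div 2) * vandermonde ys"
proof -
  have "vandermonde (map (\<lambda>y. c * y) ys) = (\<Prod>j<length ys. \<Prod>i<j. c * (ys ! j - ys ! i))"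
    by (simp add: vandermonde_def algebra_simps)
  also have "\<dots> = (\<Prod>j<length ys. c ^ j) * vandermonde ys"
    by (simp add: vandermonde_def prod.distrib)
  also have "(\<Prod>j<length ys. c ^ j) = c ^ (\<Sum>j<length ys. j)"
    by (simp add: power_sum)
  also have "(\<Sum>j<length ys. j) = length ys * (length ys - 1) div 2"
    by (rule sum_lessThan_id)
  finally show ?thesis .
qed



definition dser :: "(real \<Rightarrow> real) \<Rightarrow> (nat \<Rightarrow> real \<Rightarrow> real) \<Rightarrow> bool" where
  "dser f F \<longleftrightarrow> (\<forall>y>0. F 0 y = f y) \<and> (\<forall>i y. y > 0 \<longrightarrow> (F i has_real_derivative F (Suc i) y) (at y))"

lemma dserD: "dser f F \<Longrightarrow> y > 0 \<Longrightarrow> F 0 y = f y"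
  "dser f F \<Longrightarrow> y > 0 \<Longrightarrow> (F i has_real_derivative F (Suc i) y) (at y)"
  unfolding dser_def by auto

lemma dser_deriv:
  assumes "dser f F" "y > 0"
  shows "(deriv ^^ i) f y = F i y"
  using assms(2)
proof (induction i arbitrary: y)
  case 0
  then show ?case using dserD(1)[OF assms(1)] by simp
next
  case (Suc i)
  have "((deriv ^^ i) f has_real_derivative F (Suc i) y) (at y)"
    by (rule has_field_derivative_transform_within_open[OF dserD(2)[OF assms(1) Suc.prems], of "{0<..}"])
       (use Suc in auto)
  then show ?case by (simp add: DERIV_imp_deriv)
qed

lemma dser_unique: "dser f F \<Longrightarrow> dser f G \<Longrightarrow> y > 0 \<Longrightarrow> F i y = G i y"
  using dser_deriv by metis

lemma dser_cong: "dser f F \<Longrightarrow> (\<And>y. y > 0 \<Longrightarrow> f y = g y) \<Longrightarrow> dser g F"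
  unfolding dser_def by auto

lemma dser_cong2: "dser f F \<Longrightarrow> (\<And>i y. y > 0 \<Longrightarrow> F i y = G i y) \<Longrightarrow> dser f G"
proof -
  assume a: "dser f F" and e: "\<And>i y. y > 0 \<Longrightarrow> F i y = G i y"
  show ?thesis unfolding dser_def
  proof (intro conjI allI impI)
    fix i :: nat and y :: real assume y: "y > 0"
    have "(F i has_real_derivative G (Suc i) y) (at y)" using dserD(2)[OF a y] e[OF y] by simp
    then show "(G i has_real_derivative G (Suc i) y) (at y)"
      by (rule has_field_derivative_transform_within_open[of _ _ _ "{0<..}"]) (use y e in auto)
  qed (use a e dserD(1) in force)
qed

lemma dser_shift: "dser f F \<Longrightarrow> dser (F 1) (\<lambda>i. F (Suc i))"
  unfolding dser_def by auto

lemma dser_cmult: "dser f F \<Longrightarrow> dser (\<lambda>y. c * f y) (\<lambda>i y. c * F i y)"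
  unfolding dser_def by (auto intro: DERIV_cmult)

lemma dser_poly: "dser (poly p) (\<lambda>i. poly ((pderiv ^^ i) p))"
  unfolding dser_def by (auto intro: poly_DERIV)

lemma dser_const: "dser (\<lambda>y. c) (\<lambda>i y. if i = 0 then c else 0)"
  unfolding dser_def by auto

fun Qp :: "real \<Rightarrow> real poly \<Rightarrow> nat \<Rightarrow> real poly" where
  "Qp c p 0 = p"
| "Qp c p (Suc i) = smult (c - real i) (Qp c p i) + [:0,1:] * pderiv (Qp c p i)"

lemma powr_poly_deriv:
  assumes "y > 0"
  shows "((\<lambda>y. y powr e * poly q y) has_real_derivative
          y powr (e - 1) * poly (smult e q + [:0,1:] * pderiv q) y) (at y)"
proof -
  have "((\<lambda>y. y powr e * poly q y) has_real_derivative
          e * y powr (e - 1) * poly q y + y powr e * poly (pderiv q) y) (at y)"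
    using assms by (auto intro!: derivative_eq_intros poly_DERIV)
  also have "y powr e = y powr (e - 1) * y"
    using assms by (simp add: powr_diff)
  finally show ?thesis by (simp add: algebra_simps)
qed

lemma dser_powr_poly:
  "dser (\<lambda>y. y powr c * poly p y) (\<lambda>i y. y powr (c - real i) * poly (Qp c p i) y)"
  unfolding dser_def
proof (intro conjI allI impI)
  fix i :: nat and y :: real assume y: "y > 0"
  show "((\<lambda>y. y powr (c - real i) * poly (Qp c p i) y) has_real_derivative
          y powr (c - real (Suc i)) * poly (Qp c p (Suc i)) y) (at y)"
    using powr_poly_deriv[OF y, of "c - real i" "Qp c p i"] by (simp add: diff_diff_eq add.commute)
qed simp

lemma leibniz_sum_step:
  fixes F G :: "nat \<Rightarrow> real"
  shows "(\<Sum>l\<le>n. of_nat (n choose l) * (F (Suc l) * G (n - l) + F l * G (Suc (n - l))))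
       = (\<Sum>l\<le>Suc n. of_nat (Suc n choose l) * F l * G (Suc n - l))"
proof -
  have "(\<Sum>l\<le>Suc n. of_nat (Suc n choose l) * F l * G (Suc n - l))
      = F 0 * G (Suc n) + (\<Sum>l\<le>n. of_nat (Suc n choose Suc l) * F (Suc l) * G (n - l))"
    by (subst sum.atMost_Suc_shift) simp
  also have "(\<Sum>l\<le>n. of_nat (Suc n choose Suc l) * F (Suc l) * G (n - l))
      = (\<Sum>l\<le>n. of_nat (n choose l) * F (Suc l) * G (n - l)) + (\<Sum>l\<le>n. of_nat (n choose Suc l) * F (Suc l) * G (n - l))"
    by (simp add: sum.distrib algebra_simps)
  also have "(\<Sum>l\<le>n. of_nat (n choose Suc l) * F (Suc l) * G (n - l))
      = (\<Sum>l\<le>Suc n. of_nat (n choose l) * F l * G (Suc n - l)) - F 0 * G (Suc n)"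
    by (subst sum.atMost_Suc_shift) simp
  also have "(\<Sum>l\<le>Suc n. of_nat (n choose l) * F l * G (Suc n - l)) = (\<Sum>l\<le>n. of_nat (n choose l) * F l * G (Suc (n - l)))"
    by (simp add: Suc_diff_le)
  finally show ?thesis by (simp add: sum.distrib algebra_simps)
qed

lemma dser_mult:
  assumes "dser f F" "dser g G"
  shows "dser (\<lambda>y. f y * g y) (\<lambda>i y. \<Sum>l\<le>i. of_nat (i choose l) * F l y * G (i - l) y)"
  unfolding dser_def
proof (intro conjI allI impI)
  fix y :: real assume "y > 0"
  then show "(\<Sum>l\<le>0. of_nat (0 choose l) * F l y * G (0 - l) y) = f y * g y"
    using dserD(1)[OF assms(1)] dserD(1)[OF assms(2)] by simp
next
  fix i :: nat and y :: real assume y: "y > 0"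
  have "((\<lambda>y. \<Sum>l\<le>i. of_nat (i choose l) * F l y * G (i - l) y) has_real_derivative
        (\<Sum>l\<le>i. of_nat (i choose l) * (F (Suc l) y * G (i - l) y + F l y * G (Suc (i - l)) y))) (at y)"
    by (auto intro!: derivative_eq_intros DERIV_sum dserD(2)[OF assms(1) y] dserD(2)[OF assms(2) y]
         simp: algebra_simps)
  then show "((\<lambda>y. \<Sum>l\<le>i. of_nat (i choose l) * F l y * G (i - l) y) has_real_derivative
        (\<Sum>l\<le>Suc i. of_nat (Suc i choose l) * F l y * G (Suc i - l) y)) (at y)"
    using leibniz_sum_step[of i "\<lambda>l. F l y" "\<lambda>l. G l y"] by simp
qed



fun cc :: "nat \<Rightarrow> nat \<Rightarrow> real poly" where
  "cc 0 l = (if l = 0 then 1 else 0)"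
| "cc (Suc i) l = pderiv (cc i l) + (if l = 0 then 0 else [:0,1:] * cc i (l - 1))"

lemma cc_zero: "i < l \<Longrightarrow> cc i l = 0"
  by (induction i arbitrary: l) auto

lemma cc_diag: "cc i i = [:0,1:] ^ i"
  by (induction i) (auto simp: cc_zero)

lemma dser_chain:
  assumes "dser F FF"
  shows "dser (\<lambda>x. F (x\<^sup>2 / 2)) (\<lambda>i x. \<Sum>l\<le>i. poly (cc i l) x * FF l (x\<^sup>2 / 2))"
  unfolding dser_def
proof (intro conjI allI impI)
  fix x :: real assume "x > 0"
  then show "(\<Sum>l\<le>0. poly (cc 0 l) x * FF l (x\<^sup>2 / 2)) = F (x\<^sup>2 / 2)"
    using dserD(1)[OF assms, of "x\<^sup>2/2"] by simp
next
  fix i :: nat and x :: real assume x: "x > 0"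
  have d: "(FF l has_real_derivative FF (Suc l) (x\<^sup>2/2)) (at (x\<^sup>2/2))" for l
    using dserD(2)[OF assms, of "x\<^sup>2/2"] x by simp
  have d2: "((\<lambda>x. FF l (x\<^sup>2/2)) has_real_derivative FF (Suc l) (x\<^sup>2/2) * x) (at x)" for l
  proof -
    have g: "((\<lambda>x. x\<^sup>2/2) has_real_derivative x) (at x)"
      by (auto intro!: derivative_eq_intros)
    show ?thesis by (rule DERIV_chain2[where f="FF l" and g="\<lambda>x. x\<^sup>2/2", OF d[of l] g])
  qed
  have "((\<lambda>x. \<Sum>l\<le>i. poly (cc i l) x * FF l (x\<^sup>2 / 2)) has_real_derivative
     (\<Sum>l\<le>i. poly (pderiv (cc i l)) x * FF l (x\<^sup>2 / 2) + poly (cc i l) x * (FF (Suc l) (x\<^sup>2/2) * x))) (at x)"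
  proof (rule DERIV_sum)
    fix l
    show "((\<lambda>x. poly (cc i l) x * FF l (x\<^sup>2 / 2)) has_real_derivative
      poly (pderiv (cc i l)) x * FF l (x\<^sup>2 / 2) + poly (cc i l) x * (FF (Suc l) (x\<^sup>2/2) * x)) (at x)"
      using DERIV_mult[OF poly_DERIV d2, of "cc i l" l] by (simp add: algebra_simps)
  qed
  also have "(\<Sum>l\<le>i. poly (pderiv (cc i l)) x * FF l (x\<^sup>2 / 2) + poly (cc i l) x * (FF (Suc l) (x\<^sup>2/2) * x))
      = (\<Sum>l\<le>Suc i. poly (cc (Suc i) l) x * FF l (x\<^sup>2 / 2))"
  proof -
    have "(\<Sum>l\<le>Suc i. poly (cc (Suc i) l) x * FF l (x\<^sup>2 / 2))
        = (\<Sum>l\<le>Suc i. poly (pderiv (cc i l)) x * FF l (x\<^sup>2 / 2))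
          + (\<Sum>l\<le>Suc i. (if l = 0 then 0 else x * poly (cc i (l - 1)) x * FF l (x\<^sup>2 / 2)))"
      by (simp add: sum.distrib[symmetric] algebra_simps, intro sum.cong) auto
    also have "(\<Sum>l\<le>Suc i. poly (pderiv (cc i l)) x * FF l (x\<^sup>2 / 2)) = (\<Sum>l\<le>i. poly (pderiv (cc i l)) x * FF l (x\<^sup>2 / 2))"
      by (simp add: cc_zero)
    also have "(\<Sum>l\<le>Suc i. (if l = 0 then 0 else x * poly (cc i (l - 1)) x * FF l (x\<^sup>2 / 2)))
        = (\<Sum>l\<le>i. x * poly (cc i l) x * FF (Suc l) (x\<^sup>2 / 2))"
      by (subst sum.atMost_Suc_shift) simp
    finally show ?thesis by (simp add: sum.distrib algebra_simps)
  qed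
  finally show "((\<lambda>x. \<Sum>l\<le>i. poly (cc i l) x * FF l (x\<^sup>2 / 2)) has_real_derivative
     (\<Sum>l\<le>Suc i. poly (cc (Suc i) l) x * FF l (x\<^sup>2 / 2))) (at x)" .
qed

lemma ldet_chain:
  "ldet n (\<lambda>i j. \<Sum>l\<le>i. poly (cc i l) x * FF j l (x\<^sup>2 / 2))
   = x ^ (n * (n - 1) div 2) * ldet n (\<lambda>i j. FF j i (x\<^sup>2 / 2))"
proof -
  have "ldet n (\<lambda>i j. \<Sum>l\<le>i. poly (cc i l) x * FF j l (x\<^sup>2 / 2))
      = (\<Prod>i<n. poly (cc i i) x) * ldet n (\<lambda>i j. FF j i (x\<^sup>2 / 2))"
    by (rule ldet_lower_transform) simp
  also have "(\<Prod>i<n. poly (cc i i) x) = x ^ (\<Sum>i<n. i)"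
    by (simp add: cc_diag power_sum)
  finally show ?thesis by (simp add: sum_lessThan_id)
qed

lemma ldet_mult:
  "ldet n (\<lambda>i j. \<Sum>l\<le>i. of_nat (i choose l) * F j l * H (i - l))
   = H 0 ^ n * ldet n (\<lambda>i j. F j i)"
proof -
  have "ldet n (\<lambda>i j. \<Sum>l\<le>i. of_nat (i choose l) * F j l * H (i - l))
      = (\<Prod>i<n. of_nat (i choose i) * H (i - i)) * ldet n (\<lambda>i j. F j i)"
    by (rule ldet_lower_transform) (simp add: algebra_simps)
  then show ?thesis by simp
qed

lemma wronskian_ldet:
  assumes "length Fs = length fs" "\<And>j. j < length fs \<Longrightarrow> dser (fs ! j) (Fs ! j)" "y > 0"
  shows "wronskian fs y = ldet (length fs) (\<lambda>i j. (Fs ! j) i y)"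
  unfolding wronskian_def using assms by (intro ldet_cong) (simp add: dser_deriv)



abbreviation lh where "lh \<equiv> laguerre_hat"

lemma lh_coeff: "coeff (lh n b) i =
  (if i \<le> n then (-1) ^ (n + i) * fact n * ((real n + b) gchoose (n - i)) / fact i else 0)"
proof -
  have "coeff (laguerre n b) i = (\<Sum>j\<le>n. if j = i then (-1) ^ j * ((real n + b) gchoose (n - j)) / fact j else 0)"
    unfolding laguerre_def coeff_sum coeff_monom by (intro sum.cong) auto
  also have "\<dots> = (if i \<le> n then (-1) ^ i * ((real n + b) gchoose (n - i)) / fact i else 0)"
    by (simp add: sum.delta)
  finally show ?thesis unfolding laguerre_hat_def coeff_smult by (simp add: power_add)
qed

lemma x_mult: "[:0,1:] * (p :: real poly) = pCons 0 p"
  by simp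

lemma coeff_x_mult: "coeff ([:0,1:] * (p :: real poly)) i = (if i = 0 then 0 else coeff p (i - 1))"
  by (cases i) (simp_all add: x_mult)

lemma suc_fact: "real (Suc i) * (X / fact (Suc i)) = X / fact i"
  by (simp add: fact_Suc)

lemma LD1: "pderiv (lh (Suc n) a) = Polynomial.smult (real (Suc n)) (lh n (a + 1))"
proof (rule poly_eqI)
  fix i
  show "coeff (pderiv (lh (Suc n) a)) i = coeff (Polynomial.smult (real (Suc n)) (lh n (a + 1))) i"
  proof (cases "i \<le> n")
    case True
    have e: "real (Suc n) + a = real n + (a + 1)" by simp
    have "coeff (pderiv (lh (Suc n) a)) i = real (Suc i) * ((-1) ^ (Suc n + Suc i) * fact (Suc n) * ((real (Suc n) + a) gchoose (n - i)) / fact (Suc i))"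
      using True by (simp add: coeff_pderiv lh_coeff)
    also have "\<dots> = (-1) ^ (Suc n + Suc i) * fact (Suc n) * ((real (Suc n) + a) gchoose (n - i)) / fact i"
      by (rule suc_fact)
    also have "\<dots> = real (Suc n) * ((-1) ^ (n + i) * fact n * ((real n + (a + 1)) gchoose (n - i)) / fact i)"
      unfolding e by (simp add: fact_Suc)
    finally show ?thesis using True by (simp add: lh_coeff)
  qed (simp add: coeff_pderiv lh_coeff)
qed

lemma LD2: "Polynomial.smult b (lh m b) + [:0,1:] * pderiv (lh m b) = Polynomial.smult (real m + b) (lh m (b - 1))"
proof (rule poly_eqI)
  fix i
  have c: "coeff ([:0,1:] * pderiv (lh m b)) i = real i * coeff (lh m b) i"
    by (cases i) (simp_all add: coeff_x_mult coeff_pderiv)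
  show "coeff (Polynomial.smult b (lh m b) + [:0,1:] * pderiv (lh m b)) i = coeff (Polynomial.smult (real m + b) (lh m (b - 1))) i"
  proof (cases "i \<le> m")
    case True
    have k: "real m + b - real (m - i) = b + real i" using True by (simp add: of_nat_diff)
    have "(b + real i) * ((real m + b) gchoose (m - i)) = (real m + b) * ((real m + b - 1) gchoose (m - i))"
      using gbinomial_absorb_comp[of "real m + b" "m - i"] k by simp
    then have "((-1) ^ (m + i) * fact m) * ((b + real i) * ((real m + b) gchoose (m - i)))
        = ((-1) ^ (m + i) * fact m) * ((real m + b) * ((real m + b - 1) gchoose (m - i)))"
      by simp
    then have "(b + real i) * ((-1) ^ (m + i) * fact m * ((real m + b) gchoose (m - i)))
        = (real m + b) * ((-1) ^ (m + i) * fact m * ((real m + (b - 1)) gchoose (m - i)))"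
      by (simp add: algebra_simps)
    note h = this
    have "coeff (Polynomial.smult b (lh m b) + [:0,1:] * pderiv (lh m b)) i = (b + real i) * coeff (lh m b) i"
      unfolding coeff_add coeff_smult c by (simp add: algebra_simps)
    also have "\<dots> = ((b + real i) * ((-1) ^ (m + i) * fact m * ((real m + b) gchoose (m - i)))) / fact i"
      using True by (simp add: lh_coeff)
    also have "\<dots> = ((real m + b) * ((-1) ^ (m + i) * fact m * ((real m + (b - 1)) gchoose (m - i)))) / fact i"
      using h by simp
    also have "\<dots> = coeff (Polynomial.smult (real m + b) (lh m (b - 1))) i"
      unfolding coeff_smult lh_coeff using True by simp
    finally show ?thesis .
  qed (unfold coeff_add coeff_smult c, simp add: lh_coeff)
qed

lemma I1: "lh n (b + 1) = lh n b - pderiv (lh n b)"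
proof (rule poly_eqI)
  fix i
  show "coeff (lh n (b + 1)) i = coeff (lh n b - pderiv (lh n b)) i"
  proof (cases "i < n")
    case True
    then obtain k where k: "n - i = Suc k" "n - Suc i = k" by (metis Suc_diff_Suc)
    have g: "(real n + (b + 1)) gchoose (Suc k) = ((real n + b) gchoose k) + ((real n + b) gchoose (Suc k))"
      using gbinomial_Suc_Suc[of "real n + b" k] by (simp add: add.assoc)
    have "coeff (lh n b - pderiv (lh n b)) i =
       (-1) ^ (n + i) * fact n * ((real n + b) gchoose Suc k) / fact i
       - real (Suc i) * ((-1) ^ (n + Suc i) * fact n * ((real n + b) gchoose k) / fact (Suc i))"
      using True k by (simp add: coeff_pderiv lh_coeff)
    also have "\<dots> = (-1) ^ (n + i) * fact n * ((real n + b) gchoose Suc k) / fact i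
       - (-1) ^ (n + Suc i) * fact n * ((real n + b) gchoose k) / fact i"
      by (subst suc_fact) simp
    also have "\<dots> = (-1) ^ (n + i) * fact n * (((real n + b) gchoose Suc k) + ((real n + b) gchoose k)) / fact i"
      by (simp add: algebra_simps add_divide_distrib)
    also have "\<dots> = coeff (lh n (b + 1)) i"
      using True k g by (simp add: lh_coeff)
    finally show ?thesis by simp
  next
    case False
    then show ?thesis by (cases "i = n") (simp_all add: coeff_pderiv lh_coeff)
  qed
qed

lemma aux2:
  fixes fi q A C1 C0 b :: real
  assumes "fi > 0" "q > 0"
  shows "A * C1 / fi - (b + q) * (- A * C0 / (q * fi)) = A / (q * fi) * (q * C1 + (b + q) * C0)"
  using assms by (simp add: field_simps)

lemma I2: "lh (Suc n) (b - 1) = [:0,1:] * lh n b - Polynomial.smult b (lh n b) - [:0,1:] * pderiv (lh n b)"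
proof (rule poly_eqI)
  fix i
  have c: "coeff ([:0,1:] * pderiv (lh n b)) i = real i * coeff (lh n b) i"
  proof (cases i)
    case (Suc i')
    then show ?thesis using coeff_pderiv[of "lh n b" i'] by (simp add: coeff_x_mult)
  qed (simp add: coeff_x_mult)
  have e: "real (Suc n) + (b - 1) = real n + b" by simp
  have key: "real (Suc k) * ((real n + b) gchoose Suc k) = (b + real i) * ((real n + b) gchoose k)"
    if "k = n - i" "i \<le> n" for k i
  proof -
    have "real (Suc k) * ((real n + b) gchoose Suc k) = (real n + b - real k) * ((real n + b) gchoose k)"
      using gbinomial_absorption[of k "real n + b"] gbinomial_absorb_comp[of "real n + b" k] by simp
    also have "real n + b - real k = b + real i" using that by (simp add: of_nat_diff)
    finally show ?thesis .
  qed
  show "coeff (lh (Suc n) (b - 1)) i = coeff ([:0,1:] * lh n b - Polynomial.smult b (lh n b) - [:0,1:] * pderiv (lh n b)) i"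
  proof (cases i)
    case 0
    have "coeff (lh (Suc n) (b - 1)) 0 = (-1) ^ Suc n * fact (Suc n) * ((real n + b) gchoose Suc n)"
      unfolding lh_coeff e by simp
    also have "\<dots> = (-1) ^ Suc n * fact n * (real (Suc n) * ((real n + b) gchoose Suc n))"
      by (simp add: fact_Suc)
    also have "\<dots> = (-1) ^ Suc n * fact n * (b * ((real n + b) gchoose n))"
      using key[of n 0] by simp
    finally show ?thesis unfolding coeff_diff coeff_smult c unfolding coeff_x_mult using 0 by (simp add: lh_coeff)
  next
    case (Suc i')
    show ?thesis
    proof (cases "i' < n")
      case True
      then obtain k where k: "n - i' = Suc k" "n - Suc i' = k" by (metis Suc_diff_Suc)
      have "coeff ([:0,1:] * lh n b - Polynomial.smult b (lh n b) - [:0,1:] * pderiv (lh n b)) i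
         = coeff (lh n b) i' - (b + real i) * coeff (lh n b) i"
        unfolding coeff_diff coeff_smult c unfolding coeff_x_mult using Suc by (simp add: algebra_simps)
      also have "\<dots> = (-1) ^ (n + i') * fact n * ((real n + b) gchoose Suc k) / fact i'
           - (b + real i) * ((-1) ^ (n + i) * fact n * ((real n + b) gchoose k) / fact i)"
        using True k Suc by (simp add: lh_coeff)
      also have "\<dots> = (-1) ^ (n + i') * fact n / fact i * (real i * ((real n + b) gchoose Suc k) + (b + real i) * ((real n + b) gchoose k))"
      proof -
        have r: "real i = 1 + real i'" "fact i = (1 + real i') * fact i'" "(-1::real) ^ (n + i) = - ((-1) ^ (n + i'))"
          using Suc by (simp_all add: fact_Suc)
        show ?thesis unfolding r using aux2[of "fact i'" "1 + real i'" "(-1) ^ (n + i') * fact n"] by (simp add: mult.assoc)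
      qed
      also have "\<dots> = (-1) ^ (n + i') * fact n / fact i * (real (Suc n) * ((real n + b) gchoose Suc k))"
      proof -
        have kk: "(b + real i) * ((real n + b) gchoose k) = real (Suc k) * ((real n + b) gchoose Suc k)"
          using key[of k "Suc i'"] True k Suc by simp
        have nn: "real (Suc n) = real i + real (Suc k)" using True k Suc by simp
        have "real i * ((real n + b) gchoose Suc k) + (b + real i) * ((real n + b) gchoose k)
            = real (Suc n) * ((real n + b) gchoose Suc k)"
          unfolding kk nn by (simp add: algebra_simps)
        then show ?thesis by simp
      qed
      also have "\<dots> = coeff (lh (Suc n) (b - 1)) i"
      proof -
        have c0: "coeff (lh (Suc n) (b - 1)) i = (-1) ^ (Suc n + i) * fact (Suc n) * ((real n + b) gchoose Suc k) / fact i"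
          unfolding lh_coeff e using True k Suc by simp
        have p: "(-1::real) ^ (Suc n + i) = (-1) ^ (n + i')" using Suc by simp
        have f: "fact (Suc n) = real (Suc n) * (fact n :: real)" by (simp add: fact_Suc)
        have "coeff (lh (Suc n) (b - 1)) i = (-1) ^ (n + i') * (real (Suc n) * fact n) * ((real n + b) gchoose Suc k) / fact i"
          using c0 unfolding f p .
        then show ?thesis by (simp add: mult_ac)
      qed
      finally show ?thesis by simp
    next
      case False
      show ?thesis
      proof (cases "i' = n")
        case True
        then show ?thesis unfolding coeff_diff coeff_smult c unfolding coeff_x_mult using Suc by (simp add: lh_coeff)
      next
        case False
        then show ?thesis unfolding coeff_diff coeff_smult c unfolding coeff_x_mult using Suc \<open>\<not> i' < n\<close> by (simp add: lh_coeff)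
      qed
    qed
  qed
qed



lemma He_2: "He (Suc (Suc n)) = [:0,1:] * He (Suc n) - Polynomial.smult (real (Suc n)) (He n)"
  by simp

lemma HD_aux: "pderiv (He (Suc n)) = Polynomial.smult (real (Suc n)) (He n) \<and>
               pderiv (He (Suc (Suc n))) = Polynomial.smult (real (Suc (Suc n))) (He (Suc n))"
proof (induction n)
  case 0
  have "pderiv (He 2) = Polynomial.smult 2 (He 1)"
    by (simp add: numeral_2_eq_2 pderiv_mult pderiv_pCons)
  then show ?case by (simp add: pderiv_pCons numeral_2_eq_2)
next
  case (Suc n)
  have "pderiv (He (Suc (Suc (Suc n)))) = He (Suc (Suc n)) + [:0,1:] * pderiv (He (Suc (Suc n)))
        - Polynomial.smult (real (Suc (Suc n))) (pderiv (He (Suc n)))"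
    by (simp only: He_2 pderiv_diff pderiv_mult pderiv_smult) (simp add: pderiv_pCons)
  also have "\<dots> = He (Suc (Suc n)) + Polynomial.smult (real (Suc (Suc n))) ([:0,1:] * He (Suc n) - Polynomial.smult (real (Suc n)) (He n))"
  proof -
    have i1: "pderiv (He (Suc n)) = Polynomial.smult (real (Suc n)) (He n)"
     and i2: "pderiv (He (Suc (Suc n))) = Polynomial.smult (real (Suc (Suc n))) (He (Suc n))" using Suc by blast+
    show ?thesis by (simp only: i1 i2 mult_smult_right smult_diff_right add_diff_eq)
  qed
  also have "\<dots> = He (Suc (Suc n)) + Polynomial.smult (real (Suc (Suc n))) (He (Suc (Suc n)))"
    by (simp only: He_2[symmetric])
  also have "\<dots> = Polynomial.smult (real (Suc (Suc (Suc n)))) (He (Suc (Suc n)))"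
  proof -
    have "real (Suc (Suc (Suc n))) = 1 + real (Suc (Suc n))" by simp
    then show ?thesis by (simp only: smult_add_left smult_1_left)
  qed
  finally show ?case using Suc by simp
qed

lemma HD: "pderiv (He (Suc n)) = Polynomial.smult (real (Suc n)) (He n)"
  using HD_aux by blast

lemma HR: "He (Suc n) = [:0,1:] * He n - pderiv (He n)"
proof (cases n)
  case 0 then show ?thesis by simp
next
  case (Suc m) then show ?thesis by (simp only: He_2 HD)
qed

definition qq :: "real poly" where "qq = [:0, 0, 1/2:]"

lemma pderiv_qq: "pderiv qq = [:0,1:]"
  by (simp add: qq_def pderiv_pCons)

lemma xx_qq: "[:0,1:] * [:0,1:] = Polynomial.smult 2 qq"
  by (simp add: qq_def)

lemma x_pcompose_qq: "pcompose [:0,1:] qq = qq"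
  by (simp add: pcompose_pCons)

lemma pderiv_x: "pderiv [:0,1:] = (1 :: real poly)"
  by (simp add: pderiv_pCons)

lemma gen1:
  fixes X Y Z :: "real poly"
  shows "X * Polynomial.smult c (X * Y) - Polynomial.smult c (X * (Z * X) + Y * 1)
       = Polynomial.smult c (X * X * Y - Y - X * X * Z)"
  by (simp add: algebra_simps smult_diff_right)

lemma gen2:
  fixes A B C :: "real poly"
  shows "Polynomial.smult 2 A * B - B - Polynomial.smult 2 A * C
       = Polynomial.smult 2 (A * B - Polynomial.smult (1/2) B - A * C)"
  by (simp add: algebra_simps smult_diff_right smult_add_right)

lemma HL: "He (2 * a) = Polynomial.smult (2 ^ a) (pcompose (lh a (-1/2)) qq) \<and>
           He (2 * a + 1) = Polynomial.smult (2 ^ a) ([:0,1:] * pcompose (lh a (1/2)) qq)"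
proof (induction a)
  case 0
  have "lh 0 b = 1" for b by (simp add: laguerre_hat_def laguerre_def)
  then show ?case by (simp add: pcompose_1)
next
  case (Suc a)
  let ?P = "lh a (-1/2)" and ?Q = "lh a (1/2)"
  have ev: "He (2 * a) = Polynomial.smult (2 ^ a) (pcompose ?P qq)" using Suc by blast
  have od: "He (2 * a + 1) = Polynomial.smult (2 ^ a) ([:0,1:] * pcompose ?Q qq)"
  proof -
    have "He (2 * a + 1) = [:0,1:] * He (2 * a) - pderiv (He (2 * a))"
      using HR[of "2 * a"] by simp
    also have "\<dots> = Polynomial.smult (2 ^ a) ([:0,1:] * (pcompose ?P qq - pcompose (pderiv ?P) qq))"
      unfolding ev by (simp add: pderiv_smult pderiv_pcompose pderiv_qq algebra_simps smult_diff_right)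
    also have "pcompose ?P qq - pcompose (pderiv ?P) qq = pcompose ?Q qq"
      using I1[of a "-1/2"] by (simp add: pcompose_diff)
    finally show ?thesis .
  qed
  have "He (2 * Suc a) = [:0,1:] * He (2 * a + 1) - pderiv (He (2 * a + 1))"
    using HR[of "2 * a + 1"] by simp
  also have "\<dots> = [:0,1:] * Polynomial.smult (2 ^ a) ([:0,1:] * pcompose ?Q qq)
      - Polynomial.smult (2 ^ a) ([:0,1:] * (pcompose (pderiv ?Q) qq * [:0,1:]) + pcompose ?Q qq * 1)"
    unfolding od by (simp only: pderiv_smult pderiv_mult pderiv_pcompose pderiv_qq pderiv_x)
  also have "\<dots> = Polynomial.smult (2 ^ a) (([:0,1:] * [:0,1:]) * pcompose ?Q qq
        - pcompose ?Q qq - ([:0,1:] * [:0,1:]) * pcompose (pderiv ?Q) qq)"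
    by (rule gen1)
  also have "\<dots> = Polynomial.smult (2 ^ a) (Polynomial.smult 2 (qq * pcompose ?Q qq
        - Polynomial.smult (1/2) (pcompose ?Q qq) - qq * pcompose (pderiv ?Q) qq))"
    unfolding xx_qq by (simp only: gen2)
  also have "qq * pcompose ?Q qq - Polynomial.smult (1/2) (pcompose ?Q qq) - qq * pcompose (pderiv ?Q) qq
      = pcompose ([:0,1:] * ?Q - Polynomial.smult (1/2) ?Q - [:0,1:] * pderiv ?Q) qq"
    by (simp only: pcompose_diff pcompose_mult pcompose_smult x_pcompose_qq)
  also have "[:0,1:] * ?Q - Polynomial.smult (1/2) ?Q - [:0,1:] * pderiv ?Q = lh (Suc a) (-1/2)"
    using I2[of a "1/2"] by simp
  finally have ev': "He (2 * Suc a) = Polynomial.smult (2 ^ Suc a) (pcompose (lh (Suc a) (-1/2)) qq)"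
    by (simp add: mult.commute)
  have "He (2 * Suc a + 1) = [:0,1:] * He (2 * Suc a) - pderiv (He (2 * Suc a))"
    using HR[of "2 * Suc a"] by simp
  also have "\<dots> = Polynomial.smult (2 ^ Suc a) ([:0,1:] * (pcompose (lh (Suc a) (-1/2)) qq - pcompose (pderiv (lh (Suc a) (-1/2))) qq))"
    unfolding ev' by (simp add: pderiv_smult pderiv_pcompose pderiv_qq algebra_simps smult_diff_right)
  also have "pcompose (lh (Suc a) (-1/2)) qq - pcompose (pderiv (lh (Suc a) (-1/2))) qq = pcompose (lh (Suc a) (1/2)) qq"
    using I1[of "Suc a" "-1/2"] by (simp add: pcompose_diff)
  finally show ?case using ev' by simp
qed



fun Ecol :: "real \<Rightarrow> nat \<Rightarrow> nat + nat \<Rightarrow> real \<Rightarrow> real" where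
  "Ecol a i (Inl n) z = poly ((pderiv ^^ i) (lh n a)) z"
| "Ecol a i (Inr m) z = z powr (- a - real i) * poly (Qp (- a) (lh m (- a)) i) z"

fun fcol :: "real \<Rightarrow> nat + nat \<Rightarrow> real \<Rightarrow> real" where
  "fcol a (Inl n) = poly (lh n a)"
| "fcol a (Inr m) = (\<lambda>z. z powr (- a) * poly (lh m (- a)) z)"

fun vcol :: "real \<Rightarrow> nat + nat \<Rightarrow> real" where
  "vcol a (Inl n) = real n"
| "vcol a (Inr m) = real m - a"

lemma dser_fcol: "dser (fcol a c) (\<lambda>i. Ecol a i c)"
proof (cases c)
  case (Inl n) then show ?thesis using dser_cong2[OF dser_poly[of "lh n a"], of "\<lambda>i. Ecol a i c"] by simp
next
  case (Inr m) then show ?thesis using dser_cong2[OF dser_powr_poly[of "- a" "lh m (- a)"], of "\<lambda>i. Ecol a i c"] by simp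
qed

lemma wronskian_fcol:
  assumes "z > 0"
  shows "wronskian (map (fcol a) xs) z = ldet (length xs) (\<lambda>i j. Ecol a i (xs ! j) z)"
proof -
  have "wronskian (map (fcol a) xs) z = ldet (length (map (fcol a) xs)) (\<lambda>i j. (map (\<lambda>c i. Ecol a i c) xs ! j) i z)"
    by (rule wronskian_ldet) (use assms dser_fcol in auto)
  also have "\<dots> = ldet (length xs) (\<lambda>i j. Ecol a i (xs ! j) z)"
    unfolding length_map by (intro ldet_cong) (simp del: Ecol.simps)
  finally show ?thesis .
qed

definition lrat :: "real \<Rightarrow> (nat + nat) list \<Rightarrow> real \<Rightarrow> real" where
  "lrat a xs z = ldet (length xs) (\<lambda>i j. Ecol a i (xs ! j) z) / vandermonde (map (vcol a) xs)"

lemma lrat_perm: "mset xs = mset ys \<Longrightarrow> lrat a xs z = lrat a ys z"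
  unfolding lrat_def using wr_ratio_perm[of xs ys "\<lambda>i c. Ecol a i c z" "vcol a"] by simp

definition lpg :: "real \<Rightarrow> nat list \<Rightarrow> nat list \<Rightarrow> real \<Rightarrow> real" where
  "lpg a ns ms z = z powr ((real (length ns) + a) * real (length ms)) * lrat a (map Inl ns @ map Inr ms) z"

lemma length_degvec[simp]: "length (degvec l) = length l"
  by (simp add: degvec_def)

lemma laguerre_pair_lpg:
  assumes "z > 0"
  shows "laguerre_pair a mu nu z = lpg a (degvec mu) (degvec nu) z"
proof -
  let ?xs = "map Inl (degvec mu) @ map Inr (degvec nu)"
  have f: "map (\<lambda>n. poly (laguerre_hat n a)) (degvec mu) @ map (\<lambda>m y. y powr (- a) * poly (laguerre_hat m (- a)) y) (degvec nu)
      = map (fcol a) ?xs" by simp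
  have w: "wronskian (map (fcol a) ?xs) z = ldet (length ?xs) (\<lambda>i j. Ecol a i (?xs ! j) z)"
    by (rule wronskian_fcol[OF assms])
  have v: "map real (degvec mu) @ map (\<lambda>m. real m - a) (degvec nu) = map (vcol a) ?xs" by simp
  show ?thesis
    unfolding laguerre_pair_def lpg_def lrat_def f w v[symmetric] by simp
qed



lemma funpow_pderiv_smult: "(pderiv ^^ i) (Polynomial.smult c p) = Polynomial.smult c ((pderiv ^^ i) p)"
  by (induction i) (simp_all add: pderiv_smult)

lemma funpow_pderiv_1: "i > 0 \<Longrightarrow> (pderiv ^^ i) (1 :: real poly) = 0"
proof (induction i)
  case (Suc i)
  then show ?case by (cases i) (simp_all add: funpow_Suc_right del: funpow.simps)
qed simp

lemma funpow_pderiv_0: "(pderiv ^^ i) (0 :: real poly) = 0"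
  by (induction i) simp_all

lemma lh_0: "lh 0 a = 1"
  by (simp add: laguerre_hat_def laguerre_def)

lemma Ecol_unit: "Ecol a 0 (Inl 0) z = 1" "i > 0 \<Longrightarrow> Ecol a i (Inl 0) z = 0"
  by (simp_all add: lh_0 funpow_pderiv_1)

fun shl :: "nat + nat \<Rightarrow> nat + nat" where
  "shl (Inl n) = Inl (Suc n)"
| "shl (Inr m) = Inr m"

fun wl :: "real \<Rightarrow> nat + nat \<Rightarrow> real" where
  "wl a (Inl n) = real (Suc n)"
| "wl a (Inr m) = real m - a"

lemma Ecol_shl:
  assumes "z > 0"
  shows "Ecol a (Suc i) (shl c) z = wl a c * Ecol (a + 1) i c z"
proof (cases c)
  case (Inl n)
  have "(pderiv ^^ Suc i) (lh (Suc n) a) = (pderiv ^^ i) (pderiv (lh (Suc n) a))"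
    by (simp add: funpow_Suc_right del: funpow.simps)
  then show ?thesis using Inl by (simp add: LD1 funpow_pderiv_smult del: funpow.simps)
next
  case (Inr m)
  have d1: "dser (Ecol a 1 (Inr m)) (\<lambda>i. Ecol a (Suc i) (Inr m))"
    using dser_shift[OF dser_fcol[of a "Inr m"]] by simp
  have q: "Qp (- a) (lh m (- a)) 1 = Polynomial.smult (real m - a) (lh m (- a - 1))"
    using LD2[of "- a" m] by simp
  have e: "Ecol a 1 (Inr m) y = (real m - a) * fcol (a + 1) (Inr m) y" for y
  proof -
    have "Ecol a 1 (Inr m) y = y powr (- a - 1) * poly (Qp (- a) (lh m (- a)) 1) y"
      by (simp only: Ecol.simps of_nat_1)
    also have "\<dots> = (real m - a) * (y powr (- (a + 1)) * poly (lh m (- (a + 1))) y)"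
    proof -
      have n: "- (a + 1) = - a - 1" by simp
      show ?thesis unfolding q n by (simp only: poly_smult mult_ac)
    qed
    finally show ?thesis by simp
  qed
  have d2: "dser (Ecol a 1 (Inr m)) (\<lambda>i y. (real m - a) * Ecol (a + 1) i (Inr m) y)"
    by (rule dser_cong[OF dser_cmult[OF dser_fcol[of "a + 1" "Inr m"]]]) (metis e)
  show ?thesis using dser_unique[OF d1 d2 assms, of i] Inr by simp
qed

lemma vcol_shl: "vcol a (shl c) = vcol (a + 1) c + 1"
  by (cases c) simp_all

lemma wl_vcol: "wl a c = vcol (a + 1) c + 1"
  by (cases c) simp_all

lemma LS1_ldet:
  assumes "z > 0"
  shows "ldet (Suc (length ys)) (\<lambda>i j. Ecol a i ((Inl 0 # map shl ys) ! j) z)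
      = (\<Prod>j<length ys. wl a (ys ! j)) * ldet (length ys) (\<lambda>i j. Ecol (a + 1) i (ys ! j) z)"
proof -
  have "ldet (Suc (length ys)) (\<lambda>i j. Ecol a i ((Inl 0 # map shl ys) ! j) z)
      = ldet (length ys) (\<lambda>i j. Ecol a (Suc i) ((Inl 0 # map shl ys) ! Suc j) z)"
    by (rule ldet_unit_col) (simp_all add: Ecol_unit del: Ecol.simps)
  also have "\<dots> = ldet (length ys) (\<lambda>i j. wl a (ys ! j) * Ecol (a + 1) i (ys ! j) z)"
    by (intro ldet_cong) (simp add: Ecol_shl[OF assms] del: Ecol.simps wl.simps)
  also have "\<dots> = (\<Prod>j<length ys. wl a (ys ! j)) * ldet (length ys) (\<lambda>i j. Ecol (a + 1) i (ys ! j) z)"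
    by (rule ldet_col_scale)
  finally show ?thesis .
qed

lemma LS1_vdm:
  "vandermonde (map (vcol a) (Inl 0 # map shl ys)) = (\<Prod>j<length ys. wl a (ys ! j)) * vandermonde (map (vcol (a + 1)) ys)"
proof -
  have m: "map (vcol a) (Inl 0 # map shl ys) = 0 # map (\<lambda>y. y + 1) (map (vcol (a + 1)) ys)"
    by (simp add: vcol_shl del: vcol.simps shl.simps) simp
  have "vandermonde (0 # map (\<lambda>y. y + 1) (map (vcol (a + 1)) ys))
      = (\<Prod>j<length (map (\<lambda>y. y + 1) (map (vcol (a + 1)) ys)). map (\<lambda>y. y + 1) (map (vcol (a + 1)) ys) ! j - 0)
        * vandermonde (map (\<lambda>y. y + 1) (map (vcol (a + 1)) ys))"
    by (rule vandermonde_Cons)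
  also have "\<dots> = (\<Prod>j<length ys. wl a (ys ! j)) * vandermonde (map (vcol (a + 1)) ys)"
    unfolding vandermonde_translate by (simp add: wl_vcol del: vcol.simps wl.simps)
  finally show ?thesis unfolding m .
qed

lemma LS1_lrat:
  assumes "\<And>j. j < length ys \<Longrightarrow> wl a (ys ! j) \<noteq> 0" "z > 0"
  shows "lrat a (Inl 0 # map shl ys) z = lrat (a + 1) ys z"
proof -
  have W: "(\<Prod>j<length ys. wl a (ys ! j)) \<noteq> 0" using assms(1) by simp
  show ?thesis
    unfolding lrat_def length_Cons length_map LS1_ldet[OF assms(2)] LS1_vdm using W by simp
qed

lemma LS1:
  assumes "\<forall>m\<in>set ms. real m \<noteq> a" "z > 0"
  shows "lpg a (0 # map Suc ns) ms z = lpg (a + 1) ns ms z"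
proof -
  let ?ys = "map Inl ns @ map Inr ms"
  have xs: "map Inl (0 # map Suc ns) @ map Inr ms = Inl 0 # map shl ?ys" by simp
  have W: "wl a (?ys ! j) \<noteq> 0" if "j < length ?ys" for j
  proof -
    have "?ys ! j \<in> set ?ys" using that by (rule nth_mem)
    then show ?thesis using assms(1) by auto
  qed
  have "lrat a (map Inl (0 # map Suc ns) @ map Inr ms) z = lrat (a + 1) ?ys z"
    unfolding xs by (rule LS1_lrat[OF W assms(2)])
  then show ?thesis unfolding lpg_def by (simp add: algebra_simps)
qed



definition Hs :: "real \<Rightarrow> nat \<Rightarrow> real \<Rightarrow> real" where
  "Hs b i z = z powr (b - real i) * poly (Qp b 1 i) z"

lemma dser_Hs: "dser (\<lambda>z. z powr b) (Hs b)"
  using dser_powr_poly[of b 1] unfolding Hs_def by simp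

lemma Hs_0: "Hs b 0 z = z powr b"
  by (simp add: Hs_def)

fun gcol :: "real \<Rightarrow> nat + nat \<Rightarrow> real \<Rightarrow> real" where
  "gcol a (Inl n) = (\<lambda>z. z powr a * poly (lh n a) z)"
| "gcol a (Inr m) = poly (lh m (- a))"

fun Gcol :: "real \<Rightarrow> nat \<Rightarrow> nat + nat \<Rightarrow> real \<Rightarrow> real" where
  "Gcol a i (Inl n) z = z powr (a - real i) * poly (Qp a (lh n a) i) z"
| "Gcol a i (Inr m) z = poly ((pderiv ^^ i) (lh m (- a))) z"

lemma dser_gcol: "dser (gcol a c) (\<lambda>i. Gcol a i c)"
proof (cases c)
  case (Inl n) then show ?thesis using dser_cong2[OF dser_powr_poly[of a "lh n a"], of "\<lambda>i. Gcol a i c"] by simp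
next
  case (Inr m) then show ?thesis using dser_cong2[OF dser_poly[of "lh m (- a)"], of "\<lambda>i. Gcol a i c"] by simp
qed

lemma fcol_gcol: "z > 0 \<Longrightarrow> fcol a c z = gcol a c z * z powr (- a)"
proof (cases c)
  case (Inl n)
  assume z: "z > 0"
  have "z powr a * z powr (- a) = 1" using z by (simp add: powr_add[symmetric])
  then show ?thesis using Inl by (simp add: algebra_simps)
qed simp

lemma Ecol_split:
  assumes "z > 0"
  shows "Ecol a i c z = (\<Sum>l\<le>i. of_nat (i choose l) * Gcol a l c z * Hs (- a) (i - l) z)"
proof -
  have d: "dser (fcol a c) (\<lambda>i z. \<Sum>l\<le>i. of_nat (i choose l) * Gcol a l c z * Hs (- a) (i - l) z)"
    by (rule dser_cong[OF dser_mult[OF dser_gcol dser_Hs]]) (simp add: fcol_gcol)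
  show ?thesis using dser_unique[OF dser_fcol d assms] by simp
qed

fun shr :: "nat + nat \<Rightarrow> nat + nat" where
  "shr (Inl n) = Inl n"
| "shr (Inr m) = Inr (Suc m)"

fun wr2 :: "real \<Rightarrow> nat + nat \<Rightarrow> real" where
  "wr2 a (Inl n) = real n + a"
| "wr2 a (Inr m) = real (Suc m)"

lemma Gcol_shr:
  assumes "z > 0"
  shows "Gcol a (Suc i) (shr c) z = wr2 a c * (\<Sum>l\<le>i. of_nat (i choose l) * Ecol (a - 1) l c z * Hs (a - 1) (i - l) z)"
proof -
  have d1: "dser (Gcol a 1 (shr c)) (\<lambda>i. Gcol a (Suc i) (shr c))"
    using dser_shift[OF dser_gcol[of a "shr c"]] by simp
  have e: "Gcol a 1 (shr c) y = wr2 a c * (fcol (a - 1) c y * y powr (a - 1))" if y: "y > 0" for y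
  proof (cases c)
    case (Inl n)
    have q: "Qp a (lh n a) 1 = Polynomial.smult (real n + a) (lh n (a - 1))"
      using LD2[of a n] by simp
    have "Gcol a 1 (shr c) y = y powr (a - 1) * poly (Qp a (lh n a) 1) y"
      using Inl by (simp only: shr.simps Gcol.simps of_nat_1)
    also have "\<dots> = wr2 a c * (fcol (a - 1) c y * y powr (a - 1))"
      unfolding q using Inl by (simp only: poly_smult fcol.simps wr2.simps mult_ac)
    finally show ?thesis .
  next
    case (Inr m)
    have "Gcol a 1 (shr c) y = poly (pderiv (lh (Suc m) (- a))) y"
      using Inr by simp
    also have "\<dots> = real (Suc m) * poly (lh m (- a + 1)) y"
      by (simp add: LD1)
    also have "poly (lh m (- a + 1)) y = (y powr (- (a - 1)) * poly (lh m (- (a - 1))) y) * y powr (a - 1)"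
    proof -
      have "y powr (- (a - 1)) * y powr (a - 1) = 1" using y by (simp add: powr_add[symmetric])
      moreover have "- (a - 1) = - a + 1" by simp
      ultimately show ?thesis by (metis mult.assoc mult.commute mult.right_neutral)
    qed
    finally show ?thesis using Inr by simp
  qed
  have d2: "dser (Gcol a 1 (shr c)) (\<lambda>i y. wr2 a c * (\<Sum>l\<le>i. of_nat (i choose l) * Ecol (a - 1) l c y * Hs (a - 1) (i - l) y))"
    by (rule dser_cong[OF dser_cmult[OF dser_mult[OF dser_fcol[of "a - 1" c] dser_Hs[of "a - 1"]]]])
       (metis e)
  show ?thesis using dser_unique[OF d1 d2 assms, of i] by simp
qed

lemma vcol_shr: "vcol a (shr c) = vcol (a - 1) c"
  by (cases c) simp_all

lemma wr2_vcol: "wr2 a c = vcol (a - 1) c + a"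
  by (cases c) simp_all

lemma ldet_split:
  assumes "z > 0"
  shows "ldet n (\<lambda>i j. Ecol a i (xs ! j) z) = (z powr (- a)) ^ n * ldet n (\<lambda>i j. Gcol a i (xs ! j) z)"
proof -
  have "ldet n (\<lambda>i j. Ecol a i (xs ! j) z)
      = ldet n (\<lambda>i j. \<Sum>l\<le>i. of_nat (i choose l) * (\<lambda>j l. Gcol a l (xs ! j) z) j l * (\<lambda>k. Hs (- a) k z) (i - l))"
    by (intro ldet_cong) (simp add: Ecol_split[OF assms] del: Ecol.simps Gcol.simps)
  also have "\<dots> = (Hs (- a) 0 z) ^ n * ldet n (\<lambda>i j. Gcol a i (xs ! j) z)"
    by (rule ldet_mult)
  finally show ?thesis by (simp add: Hs_0)
qed

lemma LS2_ldet:
  assumes "z > 0"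
  shows "ldet (Suc (length ys)) (\<lambda>i j. Gcol a i ((Inr 0 # map shr ys) ! j) z)
      = (\<Prod>j<length ys. wr2 a (ys ! j)) * (z powr (a - 1)) ^ length ys * ldet (length ys) (\<lambda>i j. Ecol (a - 1) i (ys ! j) z)"
proof -
  have "ldet (Suc (length ys)) (\<lambda>i j. Gcol a i ((Inr 0 # map shr ys) ! j) z)
      = ldet (length ys) (\<lambda>i j. Gcol a (Suc i) ((Inr 0 # map shr ys) ! Suc j) z)"
    by (rule ldet_unit_col) (simp_all add: lh_0 funpow_pderiv_1)
  also have "\<dots> = ldet (length ys) (\<lambda>i j. wr2 a (ys ! j) *
      (\<Sum>l\<le>i. of_nat (i choose l) * (\<lambda>j l. Ecol (a - 1) l (ys ! j) z) j l * (\<lambda>k. Hs (a - 1) k z) (i - l)))"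
    by (intro ldet_cong) (simp add: Gcol_shr[OF assms] del: Ecol.simps Gcol.simps wr2.simps)
  also have "\<dots> = (\<Prod>j<length ys. wr2 a (ys ! j)) * ldet (length ys) (\<lambda>i j.
      (\<Sum>l\<le>i. of_nat (i choose l) * (\<lambda>j l. Ecol (a - 1) l (ys ! j) z) j l * (\<lambda>k. Hs (a - 1) k z) (i - l)))"
    by (rule ldet_col_scale)
  also have "ldet (length ys) (\<lambda>i j.
      (\<Sum>l\<le>i. of_nat (i choose l) * (\<lambda>j l. Ecol (a - 1) l (ys ! j) z) j l * (\<lambda>k. Hs (a - 1) k z) (i - l)))
      = (Hs (a - 1) 0 z) ^ length ys * ldet (length ys) (\<lambda>i j. Ecol (a - 1) i (ys ! j) z)"
    by (rule ldet_mult)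
  finally show ?thesis by (simp add: Hs_0)
qed

lemma LS2_vdm:
  "vandermonde (map (vcol a) (Inr 0 # map shr ys)) = (\<Prod>j<length ys. wr2 a (ys ! j)) * vandermonde (map (vcol (a - 1)) ys)"
proof -
  have m: "map (vcol a) (Inr 0 # map shr ys) = (- a) # map (vcol (a - 1)) ys"
    by (simp add: vcol_shr del: vcol.simps shr.simps) simp
  have "vandermonde ((- a) # map (vcol (a - 1)) ys)
      = (\<Prod>j<length (map (vcol (a - 1)) ys). map (vcol (a - 1)) ys ! j - (- a)) * vandermonde (map (vcol (a - 1)) ys)"
    by (rule vandermonde_Cons)
  also have "\<dots> = (\<Prod>j<length ys. wr2 a (ys ! j)) * vandermonde (map (vcol (a - 1)) ys)"
    by (simp add: wr2_vcol del: vcol.simps wr2.simps)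
  finally show ?thesis unfolding m .
qed

lemma LS2_lrat:
  assumes "\<And>j. j < length ys \<Longrightarrow> wr2 a (ys ! j) \<noteq> 0" "z > 0"
  shows "lrat a (Inr 0 # map shr ys) z = (z powr (- a)) ^ Suc (length ys) * (z powr (a - 1)) ^ length ys * lrat (a - 1) ys z"
proof -
  have W: "(\<Prod>j<length ys. wr2 a (ys ! j)) \<noteq> 0" using assms(1) by simp
  show ?thesis
    unfolding lrat_def length_Cons length_map ldet_split[OF assms(2)] LS2_ldet[OF assms(2)] LS2_vdm
    using W by simp
qed

lemma LS2:
  assumes "\<forall>n\<in>set ns. real n + a \<noteq> 0" "z > 0"
  shows "lpg a ns (0 # map Suc ms) z = lpg (a - 1) ns ms z"
proof -
  let ?ys = "map Inl ns @ map Inr ms"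
  have xs: "mset (map Inl ns @ map Inr (0 # map Suc ms)) = mset (Inr 0 # map shr ?ys)" by (simp add: comp_def)
  have W: "wr2 a (?ys ! j) \<noteq> 0" if "j < length ?ys" for j
  proof -
    have "?ys ! j \<in> set ?ys" using that by (rule nth_mem)
    then show ?thesis using assms(1) by auto
  qed
  have "lrat a (map Inl ns @ map Inr (0 # map Suc ms)) z = lrat a (Inr 0 # map shr ?ys) z"
    by (rule lrat_perm[OF xs])
  also have "\<dots> = (z powr (- a)) ^ Suc (length ?ys) * (z powr (a - 1)) ^ length ?ys * lrat (a - 1) ?ys z"
    by (rule LS2_lrat[OF W assms(2)])
  finally have L: "lrat a (map Inl ns @ map Inr (0 # map Suc ms)) z =
      (z powr (- a)) ^ Suc (length ?ys) * (z powr (a - 1)) ^ length ?ys * lrat (a - 1) ?ys z" .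
  have P: "z powr ((real (length ns) + a) * real (Suc (length ms))) * (z powr (- a)) ^ Suc (length ?ys) * (z powr (a - 1)) ^ length ?ys
      = z powr ((real (length ns) + (a - 1)) * real (length ms))"
  proof -
    have "z powr ((real (length ns) + a) * real (Suc (length ms))) * (z powr (- a)) ^ Suc (length ?ys) * (z powr (a - 1)) ^ length ?ys
        = z powr ((real (length ns) + a) * real (Suc (length ms)) + real (Suc (length ?ys)) * (- a) + real (length ?ys) * (a - 1))"
    proof -
      have z: "z \<noteq> 0" using assms(2) by simp
      show ?thesis unfolding powr_power[OF z] by (simp only: powr_add)
    qed
    also have "(real (length ns) + a) * real (Suc (length ms)) + real (Suc (length ?ys)) * (- a) + real (length ?ys) * (a - 1)
        = (real (length ns) + (a - 1)) * real (length ms)"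
      by (simp add: algebra_simps)
    finally show ?thesis .
  qed
  show ?thesis unfolding lpg_def L using P by (simp add: mult.assoc[symmetric])
qed



lemma LS1n:
  assumes "\<forall>k::int. a \<noteq> of_int k" "z > 0"
  shows "lpg a ([0..<s] @ map (\<lambda>n. n + s) ns) ms z = lpg (a + real s) ns ms z"
  using assms(1)
proof (induction s arbitrary: a)
  case 0 then show ?case by simp
next
  case (Suc s)
  have e: "[0..<Suc s] @ map (\<lambda>n. n + Suc s) ns = 0 # map Suc ([0..<s] @ map (\<lambda>n. n + s) ns)"
    by (simp add: upt_conv_Cons map_Suc_upt del: upt_Suc)
  have m: "\<forall>m\<in>set ms. real m \<noteq> a"
    using Suc.prems by (metis of_int_of_nat_eq)
  have a1: "\<forall>k::int. a + 1 \<noteq> of_int k"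
  proof
    fix k :: int
    show "a + 1 \<noteq> of_int k" using Suc.prems[rule_format, of "k - 1"] by auto
  qed
  show ?case unfolding e LS1[OF m assms(2)] Suc.IH[OF a1] by (simp add: algebra_simps)
qed

lemma LS2n:
  assumes "\<forall>k::int. a \<noteq> of_int k" "z > 0"
  shows "lpg a ns ([0..<s] @ map (\<lambda>n. n + s) ms) z = lpg (a - real s) ns ms z"
  using assms(1)
proof (induction s arbitrary: a)
  case 0 then show ?case by simp
next
  case (Suc s)
  have e: "[0..<Suc s] @ map (\<lambda>n. n + Suc s) ms = 0 # map Suc ([0..<s] @ map (\<lambda>n. n + s) ms)"
    by (simp add: upt_conv_Cons map_Suc_upt del: upt_Suc)
  have m: "\<forall>n\<in>set ns. real n + a \<noteq> 0"
  proof
    fix n assume "n \<in> set ns"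
    show "real n + a \<noteq> 0" using Suc.prems[rule_format, of "- int n"] by auto
  qed
  have a1: "\<forall>k::int. a - 1 \<noteq> of_int k"
  proof
    fix k :: int
    show "a - 1 \<noteq> of_int k" using Suc.prems[rule_format, of "k + 1"] by auto
  qed
  show ?case unfolding e LS2[OF m assms(2)] Suc.IH[OF a1] by (simp add: algebra_simps)
qed

lemma poly_ldet: "poly (ldet n A) x = ldet n (\<lambda>i j. poly (A i j) x)"
  unfolding ldet_def by (simp add: poly_sum poly_prod of_int_poly)

definition hwr :: "nat list \<Rightarrow> real \<Rightarrow> real" where
  "hwr ns x = ldet (length ns) (\<lambda>i j. poly ((pderiv ^^ i) (He (ns ! j))) x) / vandermonde (map real ns)"

lemma He_part_hwr: "poly (He_part lam) x = hwr (degvec lam) x"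
proof -
  have "ldet (length (degvec lam)) (\<lambda>i j. poly ((pderiv ^^ i) (map He (degvec lam) ! j)) x)
      = ldet (length (degvec lam)) (\<lambda>i j. poly ((pderiv ^^ i) (He (degvec lam ! j))) x)"
    by (rule ldet_cong) simp
  then show ?thesis unfolding He_part_def poly_wronskian_def hwr_def poly_smult poly_ldet length_map
    by simp
qed

lemma hwr_perm: "mset xs = mset ys \<Longrightarrow> hwr xs x = hwr ys x"
  unfolding hwr_def using wr_ratio_perm[of xs ys "\<lambda>i n. poly ((pderiv ^^ i) (He n)) x" real] by simp

lemma hwr_shift: "hwr (0 # map Suc ns) x = hwr ns x"
proof -
  let ?N = "length ns"
  have "ldet (Suc ?N) (\<lambda>i j. poly ((pderiv ^^ i) (He ((0 # map Suc ns) ! j))) x)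
      = ldet ?N (\<lambda>i j. poly ((pderiv ^^ Suc i) (He ((0 # map Suc ns) ! Suc j))) x)"
    by (rule ldet_unit_col) (simp_all add: funpow_pderiv_1)
  also have "\<dots> = ldet ?N (\<lambda>i j. real (Suc (ns ! j)) * poly ((pderiv ^^ i) (He (ns ! j))) x)"
  proof (intro ldet_cong)
    fix i j assume "j < ?N"
    then show "poly ((pderiv ^^ Suc i) (He ((0 # map Suc ns) ! Suc j))) x = real (Suc (ns ! j)) * poly ((pderiv ^^ i) (He (ns ! j))) x"
      by (simp add: funpow_Suc_right HD funpow_pderiv_smult del: funpow.simps He.simps)
  qed
  also have "\<dots> = (\<Prod>j<?N. real (Suc (ns ! j))) * ldet ?N (\<lambda>i j. poly ((pderiv ^^ i) (He (ns ! j))) x)"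
    by (rule ldet_col_scale)
  finally have L: "ldet (Suc ?N) (\<lambda>i j. poly ((pderiv ^^ i) (He ((0 # map Suc ns) ! j))) x) =
     (\<Prod>j<?N. real (Suc (ns ! j))) * ldet ?N (\<lambda>i j. poly ((pderiv ^^ i) (He (ns ! j))) x)" .
  have V: "vandermonde (map real (0 # map Suc ns)) = (\<Prod>j<?N. real (Suc (ns ! j))) * vandermonde (map real ns)"
  proof -
    have m: "map real (0 # map Suc ns) = 0 # map (\<lambda>y. y + 1) (map real ns)" by simp
    show ?thesis unfolding m vandermonde_Cons vandermonde_translate by (simp add: add.commute)
  qed
  have W: "(\<Prod>j<?N. real (Suc (ns ! j))) \<noteq> 0" by simp
  show ?thesis unfolding hwr_def length_Cons length_map L V using W by simp
qed

lemma hwr_shiftn: "hwr ([0..<t] @ map (\<lambda>d. d + t) es) x = hwr es x"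
proof (induction t)
  case 0 then show ?case by simp
next
  case (Suc t)
  have e: "[0..<Suc t] @ map (\<lambda>d. d + Suc t) es = 0 # map Suc ([0..<t] @ map (\<lambda>d. d + t) es)"
    by (simp add: upt_conv_Cons map_Suc_upt del: upt_Suc)
  show ?case unfolding e hwr_shift Suc.IH ..
qed



fun dcol :: "nat + nat \<Rightarrow> nat" where
  "dcol (Inl a) = 2 * a"
| "dcol (Inr b) = 2 * b + 1"

fun kc :: "nat + nat \<Rightarrow> real" where
  "kc (Inl a) = 2 ^ a"
| "kc (Inr b) = 2 ^ b * sqrt 2"

lemma poly_qq: "poly qq x = x\<^sup>2 / 2"
  by (simp add: qq_def power2_eq_square)

lemma He_fcol:
  assumes "x > 0"
  shows "poly (He (dcol c)) x = kc c * fcol (- 1/2) c (x\<^sup>2 / 2)"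
proof (cases c)
  case (Inl a)
  then show ?thesis using HL[of a] by (simp add: poly_pcompose poly_qq)
next
  case (Inr b)
  have s: "(x\<^sup>2 / 2) powr (1/2) = x / sqrt 2"
    using assms by (simp add: powr_half_sqrt real_sqrt_divide)
  have "poly (He (dcol c)) x = 2 ^ b * x * poly (lh b (1/2)) (x\<^sup>2 / 2)"
    using HL[of b] Inr by (simp add: poly_pcompose poly_qq)
  also have "\<dots> = 2 ^ b * sqrt 2 * ((x\<^sup>2 / 2) powr (1/2) * poly (lh b (1/2)) (x\<^sup>2 / 2))"
    unfolding s by simp
  finally show ?thesis using Inr by simp
qed

lemma He_col:
  assumes "x > 0"
  shows "poly ((pderiv ^^ i) (He (dcol c))) x = (\<Sum>l\<le>i. poly (cc i l) x * (kc c * Ecol (- 1/2) l c (x\<^sup>2 / 2)))"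
proof -
  have d1: "dser (poly (He (dcol c))) (\<lambda>i. poly ((pderiv ^^ i) (He (dcol c))))"
    by (rule dser_poly)
  have d2: "dser (poly (He (dcol c))) (\<lambda>i x. \<Sum>l\<le>i. poly (cc i l) x * (kc c * Ecol (- 1/2) l c (x\<^sup>2 / 2)))"
  proof -
    have "dser (\<lambda>x. kc c * fcol (- 1/2) c (x\<^sup>2 / 2)) (\<lambda>i x. kc c * (\<Sum>l\<le>i. poly (cc i l) x * Ecol (- 1/2) l c (x\<^sup>2 / 2)))"
      by (rule dser_cmult[OF dser_chain[OF dser_fcol]])
    then have "dser (\<lambda>x. kc c * fcol (- 1/2) c (x\<^sup>2 / 2)) (\<lambda>i x. \<Sum>l\<le>i. poly (cc i l) x * (kc c * Ecol (- 1/2) l c (x\<^sup>2 / 2)))"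
      by (rule dser_cong2) (simp add: sum_distrib_left mult_ac)
    then show ?thesis by (rule dser_cong) (simp add: He_fcol)
  qed
  show ?thesis using dser_unique[OF d1 d2 assms] by simp
qed

lemma vcol_dcol: "real (dcol c) = 2 * vcol (- 1/2) c"
  by (cases c) simp_all

lemma hwr_lag:
  assumes "x > 0"
  shows "hwr (map dcol ys) x = x ^ (length ys * (length ys - 1) div 2) * (\<Prod>j<length ys. kc (ys ! j))
           / 2 ^ (length ys * (length ys - 1) div 2) * lrat (- 1/2) ys (x\<^sup>2 / 2)"
proof -
  let ?N = "length ys"
  have "ldet ?N (\<lambda>i j. poly ((pderiv ^^ i) (He (map dcol ys ! j))) x)
      = ldet ?N (\<lambda>i j. \<Sum>l\<le>i. poly (cc i l) x * (\<lambda>j l z. kc (ys ! j) * Ecol (- 1/2) l (ys ! j) z) j l (x\<^sup>2 / 2))"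
    by (intro ldet_cong) (simp add: He_col[OF assms] del: Ecol.simps dcol.simps kc.simps)
  also have "\<dots> = x ^ (?N * (?N - 1) div 2) * ldet ?N (\<lambda>i j. kc (ys ! j) * Ecol (- 1/2) i (ys ! j) (x\<^sup>2 / 2))"
    by (rule ldet_chain)
  also have "ldet ?N (\<lambda>i j. kc (ys ! j) * Ecol (- 1/2) i (ys ! j) (x\<^sup>2 / 2))
      = (\<Prod>j<?N. kc (ys ! j)) * ldet ?N (\<lambda>i j. Ecol (- 1/2) i (ys ! j) (x\<^sup>2 / 2))"
    by (rule ldet_col_scale)
  finally have L: "ldet ?N (\<lambda>i j. poly ((pderiv ^^ i) (He (map dcol ys ! j))) x)
      = x ^ (?N * (?N - 1) div 2) * ((\<Prod>j<?N. kc (ys ! j)) * ldet ?N (\<lambda>i j. Ecol (- 1/2) i (ys ! j) (x\<^sup>2 / 2)))" .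
  have V: "vandermonde (map real (map dcol ys)) = 2 ^ (?N * (?N - 1) div 2) * vandermonde (map (vcol (- 1/2)) ys)"
  proof -
    have m: "map real (map dcol ys) = map (\<lambda>y. 2 * y) (map (vcol (- 1/2)) ys)"
      by (simp add: vcol_dcol del: vcol.simps dcol.simps)
    show ?thesis unfolding m vandermonde_scale length_map ..
  qed
  show ?thesis unfolding hwr_def lrat_def length_map L V by simp
qed

lemma prod_nth: "(\<Prod>j<length xs. f (xs ! j)) = prod_list (map f xs)"
proof (induction xs)
  case (Cons a xs)
  then show ?case by (simp add: prod.lessThan_Suc_shift del: prod.lessThan_Suc)
qed simp

lemma prod_list_pow: "prod_list (map (\<lambda>a. (c::real) ^ a) as) = c ^ sum_list as"
  by (induction as) (simp_all add: power_add)

lemma prod_list_pow2: "prod_list (map (\<lambda>b. (c::real) ^ b * d) bs) = c ^ sum_list bs * d ^ length bs"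
  by (induction bs) (simp_all add: power_add)

lemma prod_kc: "(\<Prod>j<length (map Inl as @ map Inr bs). kc ((map Inl as @ map Inr bs) ! j))
      = 2 ^ (sum_list as + sum_list bs) * sqrt 2 ^ length bs"
  unfolding prod_nth by (simp add: comp_def prod_list_pow prod_list_pow2 power_add)


lemma sorted_list_of_set_eqI:
  fixes A :: "'a::linorder set"
  assumes "finite A" "sorted_wrt (<) l" "set l = A"
  shows "sorted_list_of_set A = l"
proof -
  have "distinct l" using assms(2) strict_sorted_iff by blast
  then have "length l = card A" using assms(3) distinct_card by fastforce
  then show ?thesis using sorted_list_of_set_unique[of A l] assms by simp
qed

lemma strict_sorted_slos: "finite A \<Longrightarrow> sorted_wrt (<) (sorted_list_of_set A)"
  using strict_sorted_list_of_set by simp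

lemma card_below_nth:
  fixes xs :: "nat list"
  assumes "sorted_wrt (<) xs" "j < length xs"
  shows "card {x \<in> set xs. x < xs ! j} = j"
proof -
  have "{x \<in> set xs. x < xs ! j} = set (take j xs)"
  proof (rule equalityI; rule subsetI)
    fix x assume "x \<in> {x \<in> set xs. x < xs ! j}"
    then obtain i where i: "i < length xs" "x = xs ! i" "xs ! i < xs ! j" by (auto simp: in_set_conv_nth)
    have "i < j"
    proof (rule ccontr)
      assume "\<not> i < j"
      then have "j \<le> i" by simp
      then have "xs ! j \<le> xs ! i"
        using sorted_wrt_nth_less[OF assms(1), of j i] i(1) by (cases "j = i") auto
      then show False using i(3) by simp
    qed
    then show "x \<in> set (take j xs)" using i by (auto simp: in_set_conv_nth)
  next
    fix x assume "x \<in> set (take j xs)"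
    then obtain i where i: "i < j" "x = xs ! i" using assms(2) by (auto simp: in_set_conv_nth)
    then show "x \<in> {x \<in> set xs. x < xs ! j}"
      using assms sorted_wrt_nth_less[OF assms(1) i(1) assms(2)] by auto
  qed
  moreover have "distinct (take j xs)" using assms(1) strict_sorted_iff distinct_take by blast
  ultimately show ?thesis using assms(2) by (simp add: distinct_card)
qed

context
  fixes D :: "nat set"
  assumes finD: "finite D"
begin

definition "tD = (LEAST n. n \<notin> D)"
definition "ED = {d \<in> D. tD < d}"

lemma tD_notin: "tD \<notin> D"
proof -
  have "\<exists>n. n \<notin> D" using finD by (meson ex_new_if_finite infinite_UNIV_nat)
  then show ?thesis unfolding tD_def by (rule LeastI_ex)
qed

lemma below_tD: "n < tD \<Longrightarrow> n \<in> D"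
  unfolding tD_def using not_less_Least by blast

lemma D_split: "D = {0..<tD} \<union> ED"
  using below_tD tD_notin unfolding ED_def by (auto simp: not_less) (metis le_neq_implies_less)

lemma finE: "finite ED" unfolding ED_def using finD by simp

abbreviation "MD \<equiv> {n::int. n < 0} \<union> int ` D"

lemma count_neg: "m < 0 \<Longrightarrow> maya_count MD m = 0"
  unfolding maya_count_def by (simp add: card_eq_0_iff) (auto intro!: finite_subset[of _ "{}"])

lemma count_nat: "maya_count MD (int d) = card ({0..<d} - D)"
proof -
  have "{n. n \<notin> MD \<and> n < int d} = int ` ({0..<d} - D)"
  proof (rule equalityI; rule subsetI)
    fix n assume "n \<in> {n. n \<notin> MD \<and> n < int d}"
    then have n0: "n \<ge> 0" and nM: "n \<notin> int ` D" and nd: "n < int d" by auto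
    have "nat n \<notin> D"
    proof
      assume "nat n \<in> D"
      then have "int (nat n) \<in> int ` D" by blast
      with n0 nM show False by simp
    qed
    with n0 nd have "n \<ge> 0" "nat n \<notin> D" "nat n < d" by auto
    then show "n \<in> int ` ({0..<d} - D)" by (auto intro!: image_eqI[of _ _ "nat n"])
  qed auto
  then show ?thesis unfolding maya_count_def by (simp add: card_image)
qed

lemma count_pos_iff: "d \<in> D \<Longrightarrow> 0 < card ({0..<d} - D) \<longleftrightarrow> tD < d"
proof
  assume d: "d \<in> D" "0 < card ({0..<d} - D)"
  show "tD < d"
  proof (rule ccontr)
    assume "\<not> tD < d"
    then have "{0..<d} \<subseteq> D" using below_tD by auto
    then have e: "{0..<d} - D = {}" by blast
    show False using d(2) e by (metis card.empty less_irrefl)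
  qed
next
  assume "d \<in> D" "tD < d"
  then have "tD \<in> {0..<d} - D" using tD_notin by auto
  then show "0 < card ({0..<d} - D)" by (auto simp: card_gt_0_iff)
qed

lemma pos_set: "{m \<in> MD. 0 < maya_count MD m} = int ` ED"
proof (rule equalityI; rule subsetI)
  fix m assume m: "m \<in> {m \<in> MD. 0 < maya_count MD m}"
  then have "m \<ge> 0" using count_neg by fastforce
  then obtain d where d: "m = int d" "d \<in> D" using m by auto
  then show "m \<in> int ` ED" using m count_pos_iff[of d] unfolding ED_def by (auto simp: count_nat)
next
  fix m assume "m \<in> int ` ED"
  then obtain d where d: "m = int d" "d \<in> D" "tD < d" unfolding ED_def by auto
  then show "m \<in> {m \<in> MD. 0 < maya_count MD m}" using count_pos_iff[of d] by (auto simp: count_nat)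
qed

lemma count_E: "d \<in> ED \<Longrightarrow> card ({0..<d} - D) = d - tD - card {e \<in> ED. e < d}"
proof -
  assume d: "d \<in> ED"
  then have td: "tD < d" unfolding ED_def by auto
  have "{0..<d} \<inter> D = {0..<tD} \<union> {e \<in> ED. e < d}"
    using D_split td by (auto simp: ED_def)
  moreover have "{0..<tD} \<inter> {e \<in> ED. e < d} = {}" unfolding ED_def by auto
  ultimately have c: "card ({0..<d} \<inter> D) = tD + card {e \<in> ED. e < d}"
    using finE by (simp add: card_Un_disjoint)
  have "card ({0..<d} - D) = d - card ({0..<d} \<inter> D)"
    by (metis card_Diff_subset_Int card_atLeastLessThan diff_zero finite_Int finite_atLeastLessThan)
  then show ?thesis using c by simp
qed

definition "esD = sorted_list_of_set ED"

lemma esD_props: "sorted_wrt (<) esD" "set esD = ED"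
  unfolding esD_def using finE strict_sorted_slos by auto

lemma esD_gt: "j < length esD \<Longrightarrow> tD < esD ! j"
  using esD_props(2) nth_mem unfolding ED_def by fastforce

lemma count_esD: "j < length esD \<Longrightarrow> card ({0..<esD ! j} - D) = esD ! j - tD - j"
proof -
  assume j: "j < length esD"
  have "esD ! j \<in> ED" using j esD_props(2) nth_mem by blast
  moreover have "{e \<in> ED. e < esD ! j} = {x \<in> set esD. x < esD ! j}" using esD_props(2) by simp
  ultimately show ?thesis using count_E card_below_nth[OF esD_props(1) j] by simp
qed

lemma partition_MD: "partition_of_maya MD = rev (map (\<lambda>j. esD ! j - tD - j) [0..<length esD])"
proof -
  have s: "sorted_list_of_set (int ` ED) = map int esD"
  proof (rule sorted_list_of_set_eqI)
    show "finite (int ` ED)" using finE by simp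
    show "sorted_wrt (<) (map int esD)" using esD_props(1) by (simp add: sorted_wrt_map)
    show "set (map int esD) = int ` ED" using esD_props(2) by simp
  qed
  have m: "map (maya_count MD) (map int esD) = map (\<lambda>j. esD ! j - tD - j) [0..<length esD]"
    by (rule nth_equalityI) (simp_all add: count_nat count_esD)
  have so: "sorted (map (\<lambda>j. esD ! j - tD - j) [0..<length esD])"
  proof (rule sorted_iff_nth_mono_less[THEN iffD2], intro allI impI)
    fix i j assume ij: "i < j" "j < length (map (\<lambda>j. esD ! j - tD - j) [0..<length esD])"
    then have j: "j < length esD" by simp
    have "esD ! i + (j - i) \<le> esD ! j"
      using ij j
    proof (induction j)
      case 0 then show ?case by simp
    next
      case (Suc j)
      show ?case
      proof (cases "i = j")
        case True
        then show ?thesis using sorted_wrt_nth_less[OF esD_props(1), of j "Suc j"] Suc.prems by simp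
      next
        case False
        then have "esD ! i + (j - i) \<le> esD ! j" using Suc by simp
        moreover have "esD ! j < esD ! Suc j" using sorted_wrt_nth_less[OF esD_props(1), of j "Suc j"] Suc.prems by simp
        ultimately show ?thesis using False Suc.prems by simp
      qed
    qed
    then show "map (\<lambda>j. esD ! j - tD - j) [0..<length esD] ! i \<le> map (\<lambda>j. esD ! j - tD - j) [0..<length esD] ! j"
      using ij j by simp
  qed
  show ?thesis unfolding partition_of_maya_def pos_set s m sorted_sort_id[OF so] ..
qed

lemma degvec_MD: "degvec (partition_of_maya MD) = rev (map (\<lambda>d. d - tD) esD)"
proof -
  let ?L = "length esD"
  show ?thesis unfolding partition_MD
  proof (rule nth_equalityI)
    show "length (degvec (rev (map (\<lambda>j. esD ! j - tD - j) [0..<?L]))) = length (rev (map (\<lambda>d. d - tD) esD))"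
      by (simp add: degvec_def)
  next
    fix i assume "i < length (degvec (rev (map (\<lambda>j. esD ! j - tD - j) [0..<?L])))"
    then have i: "i < ?L" by (simp add: degvec_def)
    have g: "tD < esD ! (?L - 1 - i)" using esD_gt i by simp
    have "esD ! (?L - 1 - i) \<ge> tD + (?L - 1 - i)"
    proof -
      have kk: "esD ! k \<ge> tD + 1 + k" if "k < ?L" for k
        using that
      proof (induction k)
        case 0 then show ?case using esD_gt by fastforce
      next
        case (Suc k)
        then show ?case using sorted_wrt_nth_less[OF esD_props(1), of k "Suc k"] by simp
      qed
      have "?L - 1 - i < ?L" using i by simp
      then show ?thesis using kk[of "?L - 1 - i"] by simp
    qed
    then show "degvec (rev (map (\<lambda>j. esD ! j - tD - j) [0..<?L])) ! i = rev (map (\<lambda>d. d - tD) esD) ! i"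
    proof -
      assume h: "esD ! (?L - 1 - i) \<ge> tD + (?L - 1 - i)"
      define k where "k = ?L - 1 - i"
      have k: "k < ?L" "k + i = ?L - 1" using i unfolding k_def by auto
      have "degvec (rev (map (\<lambda>j. esD ! j - tD - j) [0..<?L])) ! i = (esD ! k - tD - k) + ?L - 1 - i"
        using i k by (simp add: degvec_def rev_nth k_def)
      also have "\<dots> = esD ! k - tD" using h k unfolding k_def[symmetric] by simp
      also have "\<dots> = rev (map (\<lambda>d. d - tD) esD) ! i" using i by (simp add: rev_nth k_def)
      finally show ?thesis .
    qed
  qed
qed

lemma slos_D: "sorted_list_of_set D = [0..<tD] @ map (\<lambda>d. d + tD) (map (\<lambda>d. d - tD) esD)"
proof (rule sorted_list_of_set_eqI[OF finD])
  have m: "map (\<lambda>d. d + tD) (map (\<lambda>d. d - tD) esD) = esD"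
    using esD_gt by (intro nth_equalityI) (auto simp: less_imp_le)
  show "sorted_wrt (<) ([0..<tD] @ map (\<lambda>d. d + tD) (map (\<lambda>d. d - tD) esD))"
    unfolding m sorted_wrt_append using esD_props ED_def by auto
  show "set ([0..<tD] @ map (\<lambda>d. d + tD) (map (\<lambda>d. d - tD) esD)) = D"
    unfolding m using D_split esD_props(2) by auto
qed

end


lemma maya_shift_nat:
  assumes "s \<ge> 0"
  shows "maya_shift ({n. n < 0} \<union> int ` set L) s = {n. n < 0} \<union> int ` set ([0..<nat s] @ map (\<lambda>n. n + nat s) L)"
proof (rule equalityI; rule subsetI)
  fix m assume "m \<in> maya_shift ({n. n < 0} \<union> int ` set L) s"
  then obtain n where n: "m = n + s" "n < 0 \<or> n \<in> int ` set L" unfolding maya_shift_def by auto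
  show "m \<in> {n. n < 0} \<union> int ` set ([0..<nat s] @ map (\<lambda>n. n + nat s) L)"
  proof (cases "m < 0")
    case False
    then have m0: "m \<ge> 0" by simp
    show ?thesis
    proof (cases "n < 0")
      case True
      then have "nat m < nat s" using n m0 by auto
      then have "nat m \<in> set [0..<nat s]" by simp
      then show ?thesis using m0 by (auto intro!: image_eqI[of _ _ "nat m"])
    next
      case False
      then obtain l where l: "l \<in> set L" "n = int l" using n by auto
      then have "m = int (l + nat s)" using n assms by simp
      moreover have "l + nat s \<in> set ([0..<nat s] @ map (\<lambda>n. n + nat s) L)" using l by simp
      ultimately show ?thesis by blast
    qed
  qed simp
next
  fix m assume m: "m \<in> {n. n < 0} \<union> int ` set ([0..<nat s] @ map (\<lambda>n. n + nat s) L)"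
  show "m \<in> maya_shift ({n. n < 0} \<union> int ` set L) s"
    unfolding maya_shift_def
  proof (rule image_eqI[of _ _ "m - s"])
    show "m = m - s + s" by simp
    show "m - s \<in> {n. n < 0} \<union> int ` set L"
      using m assms by auto
  qed
qed

lemma maya_degvec: "maya lam = {n. n < 0} \<union> int ` set (degvec lam)"
  unfolding maya_def by simp

lemma interleave:
  "(\<lambda>m. 2 * m) ` ({n::int. n < 0} \<union> int ` A) \<union> (\<lambda>m. 2 * m + 1) ` ({n. n < 0} \<union> int ` B)
   = {n. n < 0} \<union> int ` ((\<lambda>a. 2 * a) ` A \<union> (\<lambda>b. 2 * b + 1) ` B)"
proof (rule equalityI; rule subsetI)
  fix x assume "x \<in> (\<lambda>m. 2 * m) ` ({n::int. n < 0} \<union> int ` A) \<union> (\<lambda>m. 2 * m + 1) ` ({n. n < 0} \<union> int ` B)"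
  then consider (e) m where "x = 2 * m" "m < 0 \<or> m \<in> int ` A" | (o) m where "x = 2 * m + 1" "m < 0 \<or> m \<in> int ` B"
    by blast
  then show "x \<in> {n. n < 0} \<union> int ` ((\<lambda>a. 2 * a) ` A \<union> (\<lambda>b. 2 * b + 1) ` B)"
  proof cases
    case e
    show ?thesis
    proof (cases "m < 0")
      case True then show ?thesis using e by simp
    next
      case False
      then obtain a where a: "a \<in> A" "m = int a" using e by auto
      then have "x = int (2 * a)" using e by simp
      then show ?thesis using a by blast
    qed
  next
    case o
    show ?thesis
    proof (cases "m < 0")
      case True then show ?thesis using o by simp
    next
      case False
      then obtain b where b: "b \<in> B" "m = int b" using o by auto
      then have "x = int (2 * b + 1)" using o by simp
      then show ?thesis using b by blast
    qed
  qed
next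
  fix x assume x: "x \<in> {n. n < 0} \<union> int ` ((\<lambda>a. 2 * a) ` A \<union> (\<lambda>b. 2 * b + 1) ` B)"
  show "x \<in> (\<lambda>m. 2 * m) ` ({n::int. n < 0} \<union> int ` A) \<union> (\<lambda>m. 2 * m + 1) ` ({n. n < 0} \<union> int ` B)"
  proof (cases "x < 0")
    case True
    show ?thesis
    proof (cases "even x")
      case True
      then have "x = 2 * (x div 2)" by simp
      moreover have "x div 2 < 0" using \<open>x < 0\<close> by simp
      ultimately show ?thesis by blast
    next
      case False
      then have "x = 2 * (x div 2) + 1" by (simp add: odd_two_times_div_two_succ)
      moreover have "x div 2 < 0" using \<open>x < 0\<close> by simp
      ultimately show ?thesis by blast
    qed
  next
    case False
    then obtain y where y: "x = int y" "y \<in> (\<lambda>a. 2 * a) ` A \<union> (\<lambda>b. 2 * b + 1) ` B" using x by auto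
    then show ?thesis
    proof (cases "y \<in> (\<lambda>a. 2 * a) ` A")
      case True
      then obtain a where "a \<in> A" "y = 2 * a" by auto
      then have "x = 2 * int a" "int a \<in> int ` A" using y by auto
      then show ?thesis by blast
    next
      case False
      then obtain b where "b \<in> B" "y = 2 * b + 1" using y by auto
      then have "x = 2 * int b + 1" "int b \<in> int ` B" using y by auto
      then show ?thesis by blast
    qed
  qed
qed



lemma real_mult_pred: "real (a * (a - 1)) = real a * (real a - 1)"
  by (cases a) (simp_all add: algebra_simps)

lemma final_arith:
  fixes X :: real and a b k pm pn SA SB P K :: nat
  assumes X: "X > 0" and b: "b = a + k"
    and SA: "2 * SA = 2 * pm + a * (a - 1)" and SB: "2 * SB = 2 * pn + b * (b - 1)"
    and P: "2 * P = (a + b) * (a + b - 1)" and K: "2 * K = k * (k + 1)"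
  shows "X ^ P * (2 ^ (SA + SB) * sqrt 2 ^ b) / 2 ^ P / (X\<^sup>2 / 2) powr ((real a - 1/2) * real b)
       = 2 ^ (pm + pn) * X ^ K"
proof -
  have "real (2 * SA) = real (2 * pm) + real (a * (a - 1))" by (simp only: SA of_nat_add)
  then have rSA: "real SA = real pm + real a * (real a - 1) / 2"
    unfolding real_mult_pred by simp
  have "real (2 * SB) = real (2 * pn) + real (b * (b - 1))" by (simp only: SB of_nat_add)
  then have rSB: "real SB = real pn + real b * (real b - 1) / 2"
    unfolding real_mult_pred by simp
  have "real (2 * P) = real ((a + b) * (a + b - 1))" by (simp only: P)
  then have rP: "real P = (real a + real b) * (real a + real b - 1) / 2"
    unfolding real_mult_pred by simp
  have rK: "real K = real k * (real k + 1) / 2"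
    using arg_cong[OF K, of real] by (simp add: algebra_simps)
  let ?e = "(real a - 1/2) * real b"
  have p1: "X ^ n = X powr real n" for n using X by (simp add: powr_realpow)
  have p2: "(2::real) ^ n = 2 powr real n" for n by (simp add: powr_realpow)
  have p3: "sqrt 2 ^ b = 2 powr (real b / 2)"
  proof -
    have "sqrt 2 ^ b = (2 powr (1/2)) ^ b" by (simp add: powr_half_sqrt)
    also have "\<dots> = 2 powr (real b * (1/2))" by (rule powr_power) simp
    finally show ?thesis by simp
  qed
  have p4: "(X\<^sup>2 / 2) powr ?e = X powr (2 * ?e) / 2 powr ?e"
  proof -
    have "(X\<^sup>2 / 2) powr ?e = (X\<^sup>2) powr ?e / 2 powr ?e" using X by (simp add: powr_divide)
    also have "(X\<^sup>2) powr ?e = X powr (2 * ?e)"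
    proof -
      have "X\<^sup>2 = X powr 2" using X by (simp add: powr_numeral)
      then show ?thesis by (simp only: powr_powr)
    qed
    finally show ?thesis .
  qed
  have "X ^ P * (2 ^ (SA + SB) * sqrt 2 ^ b) / 2 ^ P / (X\<^sup>2 / 2) powr ?e
      = X powr (real P - 2 * ?e) * 2 powr (real SA + real SB + real b / 2 - real P + ?e)"
  proof -
    have "X ^ P * (2 ^ (SA + SB) * sqrt 2 ^ b) / 2 ^ P / (X\<^sup>2 / 2) powr ?e
        = (X powr real P / X powr (2 * ?e)) * (2 powr real SA * 2 powr real SB * 2 powr (real b / 2) * 2 powr ?e / 2 powr real P)"
      unfolding p4 unfolding p1 p2 p3 using X by (simp add: field_simps powr_add)
    also have "\<dots> = X powr (real P - 2 * ?e) * 2 powr (real SA + real SB + real b / 2 - real P + ?e)"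
      by (simp add: powr_add[symmetric] powr_diff[symmetric] algebra_simps)
    finally show ?thesis .
  qed
  also have "real P - 2 * ?e = real K"
    unfolding rP rK b by (simp add: field_simps)
  also have "real SA + real SB + real b / 2 - real P + ?e = real pm + real pn"
    unfolding rSA rSB rP b by (simp add: field_simps)
  finally show ?thesis unfolding p1 p2 by (simp add: mult.commute)
qed



lemma He_neg_aux: "poly (He n) (- x) = (-1) ^ n * poly (He n) x \<and> poly (He (Suc n)) (- x) = (-1) ^ Suc n * poly (He (Suc n)) x"
proof (induction n)
  case 0 then show ?case by simp
next
  case (Suc n)
  then have i1: "poly (He n) (- x) = (-1) ^ n * poly (He n) x"
    and i2: "poly (He (Suc n)) (- x) = (-1) ^ Suc n * poly (He (Suc n)) x" by blast+
  have "poly (He (Suc (Suc n))) (- x) = - x * poly (He (Suc n)) (- x) - real (Suc n) * poly (He n) (- x)"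
    by simp
  also have "\<dots> = (-1) ^ Suc (Suc n) * poly (He (Suc (Suc n))) x"
    unfolding i1 i2 by (simp add: algebra_simps)
  finally show ?case using i2 by simp
qed

lemma He_neg: "poly (He n) (- x) = (-1) ^ n * poly (He n) x"
  using He_neg_aux by blast

lemma He_deriv_neg: "poly ((pderiv ^^ i) (He n)) (- x) = (-1) ^ (n + i) * poly ((pderiv ^^ i) (He n)) x"
proof (induction i arbitrary: n)
  case 0 then show ?case by (simp add: He_neg)
next
  case (Suc i)
  show ?case
  proof (cases n)
    case 0
    then show ?thesis by (simp add: funpow_pderiv_1 del: funpow.simps)
  next
    case (Suc m)
    have e: "(pderiv ^^ Suc i) (He n) = Polynomial.smult (real n) ((pderiv ^^ i) (He m))"
      using Suc by (simp add: funpow_Suc_right HD funpow_pderiv_smult del: funpow.simps He.simps)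
    show ?thesis unfolding e poly_smult Suc.IH using Suc by simp
  qed
qed

lemma hwr_neg: "hwr L (- x) = (-1) ^ (sum_list L + length L * (length L - 1) div 2) * hwr L x"
proof -
  let ?N = "length L"
  have "ldet ?N (\<lambda>i j. poly ((pderiv ^^ i) (He (L ! j))) (- x))
      = ldet ?N (\<lambda>i j. (-1) ^ i * ((-1) ^ (L ! j) * poly ((pderiv ^^ i) (He (L ! j))) x))"
    by (intro ldet_cong) (simp add: He_deriv_neg power_add)
  also have "\<dots> = (\<Prod>i<?N. (-1) ^ i) * ldet ?N (\<lambda>i j. (-1) ^ (L ! j) * poly ((pderiv ^^ i) (He (L ! j))) x)"
    by (rule ldet_row_scale)
  also have "ldet ?N (\<lambda>i j. (-1) ^ (L ! j) * poly ((pderiv ^^ i) (He (L ! j))) x)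
      = (\<Prod>j<?N. (-1) ^ (L ! j)) * ldet ?N (\<lambda>i j. poly ((pderiv ^^ i) (He (L ! j))) x)"
    by (rule ldet_col_scale)
  also have "(\<Prod>i<?N. (-1::real) ^ i) = (-1) ^ (?N * (?N - 1) div 2)"
  proof -
    have "(-1::real) ^ (\<Sum>i<?N. i) = (\<Prod>i<?N. (-1) ^ i)" by (rule power_sum)
    then show ?thesis unfolding sum_lessThan_id by simp
  qed
  also have "(\<Prod>j<?N. (-1::real) ^ (L ! j)) = (-1) ^ sum_list L"
    unfolding prod_nth by (simp add: prod_list_pow)
  finally show ?thesis unfolding hwr_def by (simp add: power_add)
qed



lemma degvec_nth: "i < length l \<Longrightarrow> degvec l ! i = l ! i + length l - 1 - i"
  by (simp add: degvec_def)

lemma degvec_strict: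
  assumes "is_partition l"
  shows "sorted_wrt (>) (degvec l)"
proof -
  have s: "sorted_wrt (\<ge>) l" using assms unfolding is_partition_def by simp
  show ?thesis
  proof (rule sorted_wrt_iff_nth_less[THEN iffD2], intro allI impI)
    fix i j assume ij: "i < j" "j < length (degvec l)"
    then have j: "j < length l" by simp
    have "l ! i \<ge> l ! j" using sorted_wrt_nth_less[OF s ij(1) j] by simp
    then show "degvec l ! i > degvec l ! j" using ij j by (simp add: degvec_nth)
  qed
qed

lemma degvec_distinct: "is_partition l \<Longrightarrow> distinct (degvec l)"
proof -
  assume "is_partition l"
  then have "sorted_wrt (<) (rev (degvec l))" using degvec_strict by (simp add: sorted_wrt_rev)
  then have "distinct (rev (degvec l))" using strict_sorted_iff by blast
  then show ?thesis by simp
qed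

lemma double_sum_rev: "2 * (\<Sum>i<n. n - 1 - i) = n * (n - 1::nat)"
proof (induction n)
  case (Suc n)
  have "(\<Sum>i<Suc n. Suc n - 1 - i) = (\<Sum>i<n. n - 1 - i) + n"
  proof -
    have "(\<Sum>i<Suc n. Suc n - 1 - i) = (\<Sum>i<Suc n. n - i)" by simp
    also have "\<dots> = (\<Sum>i<n. n - i)" by simp
    also have "\<dots> = (\<Sum>i<n. (n - 1 - i) + 1)" by (intro sum.cong) auto
    also have "\<dots> = (\<Sum>i<n. n - 1 - i) + n" by (subst sum.distrib) simp
    finally show ?thesis .
  qed
  then have "2 * (\<Sum>i<Suc n. Suc n - 1 - i) = n * (n - 1) + 2 * n" using Suc by simp
  also have "\<dots> = Suc n * (Suc n - 1)" by (cases n) auto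
  finally show ?case .
qed simp

lemma sum_degvec: "2 * sum_list (degvec l) = 2 * psize l + length l * (length l - 1)"
proof -
  let ?n = "length l"
  have "sum_list (degvec l) = (\<Sum>i<?n. l ! i + ?n - 1 - i)"
    unfolding degvec_def by (simp add: sum_list_sum_nth atLeast0LessThan)
  also have "\<dots> = (\<Sum>i<?n. l ! i + (?n - 1 - i))"
    by (intro sum.cong) auto
  also have "\<dots> = sum_list l + (\<Sum>i<?n. ?n - 1 - i)"
    by (simp only: sum.distrib) (simp add: sum_list_sum_nth atLeast0LessThan)
  finally show ?thesis unfolding psize_def using double_sum_rev[of ?n] by simp
qed

lemma sum_list_shift: "sum_list (map (\<lambda>n. n + s) L) = sum_list L + s * length (L :: nat list)"
  by (induction L) simp_all

lemma int_mult_pred: "int (n * (n - 1)) = int n * (int n - 1)"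
  by (cases n) (simp_all add: algebra_simps)

lemma sum_shifted:
  "2 * sum_list ([0..<s] @ map (\<lambda>n. n + s) (degvec l)) = 2 * psize l + (s + length l) * (s + length l - 1)"
proof -
  have a: "2 * sum_list [0..<s] = s * (s - 1)"
    using double_sum_lessThan[of s] by (simp add: sum_list_upt atLeast0LessThan)
  have b: "sum_list (map (\<lambda>n. n + s) (degvec l)) = sum_list (degvec l) + s * length l"
    using sum_list_shift[of s "degvec l"] by simp
  have a': "int (2 * sum_list [0..<s]) = int s * (int s - 1)"
    unfolding a int_mult_pred ..
  have c': "int (2 * sum_list (degvec l)) = 2 * int (psize l) + int (length l) * (int (length l) - 1)"
    unfolding sum_degvec of_nat_add int_mult_pred by simp
  have "int (2 * sum_list ([0..<s] @ map (\<lambda>n. n + s) (degvec l)))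
      = int (2 * sum_list [0..<s]) + int (2 * sum_list (degvec l)) + 2 * int s * int (length l)"
    using b by (simp add: algebra_simps)
  also have "\<dots> = int s * (int s - 1) + (2 * int (psize l) + int (length l) * (int (length l) - 1)) + 2 * int s * int (length l)"
    by (simp only: a' c')
  also have "\<dots> = int (2 * psize l) + int (s + length l) * (int (s + length l) - 1)"
    by (simp add: algebra_simps)
  also have "\<dots> = int (2 * psize l + (s + length l) * (s + length l - 1))"
    by (simp only: of_nat_add int_mult_pred)
  finally show ?thesis by (simp only: of_nat_eq_iff)
qed

lemma distinct_shifted:
  "distinct L \<Longrightarrow> distinct ([0..<s] @ map (\<lambda>n. n + s) L)"
  by (auto simp: distinct_map inj_on_def)

lemma inj_dcol: "inj dcol"
proof (rule injI)
  fix c c' assume e: "dcol c = dcol c'"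
  show "c = c'"
  proof (cases c; cases c')
    fix a a' assume "c = Inl a" "c' = Inl a'" then show ?thesis using e by simp
  next
    fix a b assume "c = Inl a" "c' = Inr b"
    then have "2 * a = 2 * b + 1" using e by simp
    then have False by presburger
    then show ?thesis ..
  next
    fix a b assume "c = Inr b" "c' = Inl a"
    then have "2 * a = 2 * b + 1" using e by simp
    then have False by presburger
    then show ?thesis ..
  next
    fix b b' assume "c = Inr b" "c' = Inr b'" then show ?thesis using e by simp
  qed
qed

lemma set_dcol: "set (map dcol (map Inl As @ map Inr Bs)) = (\<lambda>a. 2 * a) ` set As \<union> (\<lambda>b. 2 * b + 1) ` set Bs"
  by (auto simp: image_iff)

lemma Phi_eq:
  fixes mu nu :: "nat list" and k :: nat
  defines "dd \<equiv> int k + int (length mu) - int (length nu)"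
  defines "si \<equiv> (if dd \<ge> 0 then 0 else - dd)" and "si' \<equiv> (if dd \<ge> 0 then dd else 0)"
  shows "Phi mu nu (int k) = partition_of_maya ({n. n < 0} \<union> int ` set (map dcol (map Inl ([0..<nat si] @ map (\<lambda>n. n + nat si) (degvec mu)) @ map Inr ([0..<nat si'] @ map (\<lambda>n. n + nat si') (degvec nu)))))"
proof -
  have s0: "si \<ge> 0" "si' \<ge> 0" unfolding si_def si'_def by auto
  show ?thesis
    unfolding Phi_def Let_def dd_def[symmetric] si_def[symmetric] si'_def[symmetric] maya_degvec
      maya_shift_nat[OF s0(1)] maya_shift_nat[OF s0(2)] interleave set_dcol ..
qed



lemma nonint_half: "\<forall>k::int. - 1/2 + real n \<noteq> of_int k"
proof
  fix k :: int
  show "- 1/2 + real n \<noteq> of_int k"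
  proof
    assume "- 1/2 + real n = of_int k"
    then have "real_of_int (2 * k) = real_of_int (2 * int n - 1)" by simp
    then have "2 * k = 2 * int n - 1" by (simp only: of_int_eq_iff)
    then show False by presburger
  qed
qed

lemma two_div_pred: "2 * (n * (n - 1) div 2) = n * (n - 1::nat)"
proof -
  have "even (n * (n - 1))" by (cases "even n") auto
  then show ?thesis by simp
qed

lemma two_div_succ: "2 * (k * (k + 1) div 2) = k * (k + 1::nat)"
proof -
  have "even (k * (k + 1))" by simp
  then show ?thesis by simp
qed

lemma sum_dcol: "sum_list (map dcol (map Inl As @ map Inr Bs)) = 2 * sum_list As + 2 * sum_list Bs + length Bs"
proof -
  have a: "sum_list (map (\<lambda>x. 2 * x) As) = 2 * sum_list As" by (induction As) simp_all
  have b: "sum_list (map (\<lambda>x. 2 * x + 1) Bs) = 2 * sum_list Bs + length Bs" by (induction Bs) simp_all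
  show ?thesis using a b by (simp add: comp_def)
qed

lemma parity_aux:
  fixes a b k P K :: nat
  assumes "b = a + k" "2 * P = (a + b) * (a + b - 1)" "2 * K = k * (k + 1)"
  shows "even (b + P + K)"
proof -
  have "int (2 * P) = int ((a + b) * (a + b - 1))" using assms(2) by simp
  then have iP: "2 * int P = (int a + int b) * (int a + int b - 1)"
    unfolding int_mult_pred by simp
  have iK: "2 * int K = int k * (int k + 1)"
    using arg_cong[OF assms(3), of int] by (simp add: algebra_simps)
  have "2 * int (b + P + K) = 2 * (2 * (int a * int a + int a * int k) + int k * (int k + 1))"
    using iP iK assms(1) by (simp add: algebra_simps)
  then have "int (b + P + K) = 2 * (int a * int a + int a * int k) + int k * (int k + 1)" by simp
  moreover have "even (2 * (int a * int a + int a * int k) + int k * (int k + 1))" by simp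
  ultimately have "even (int (b + P + K))" by simp
  then show ?thesis by simp
qed

theorem proposition6p1:
  fixes lam mu nu :: "nat list" and k :: nat and x :: real
  assumes "is_partition mu" and "is_partition nu"
    and "lam = Phi mu nu (int k)"
    and "x \<noteq> 0"
  shows "poly (He_part lam) x =
           2 ^ (psize mu + psize nu) * x ^ (k * (k + 1) div 2)
           * laguerre_pair (- 1/2 - real (length mu) + real (length nu) - real k) mu nu (x\<^sup>2 / 2)"
proof -
  note pm = assms(1) and pn = assms(2) and lam = assms(3) and x0 = assms(4)
  define dd where "dd = int k + int (length mu) - int (length nu)"
  define si where "si = (if dd \<ge> 0 then 0 else - dd)"
  define si' where "si' = (if dd \<ge> 0 then dd else 0)"
  define s where "s = nat si"
  define s' where "s' = nat si'"
  define As where "As = [0..<s] @ map (\<lambda>n. n + s) (degvec mu)"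
  define Bs where "Bs = [0..<s'] @ map (\<lambda>n. n + s') (degvec nu)"
  define ys where "ys = map Inl As @ map Inr Bs"
  define D where "D = set (map dcol ys)"
  define a where "a = length As"
  define b where "b = length Bs"
  define \<alpha> where "\<alpha> = - 1/2 - real (length mu) + real (length nu) - real k"
  define K where "K = k * (k + 1) div 2"
  define LP where "LP = laguerre_pair \<alpha> mu nu"
  have a_eq: "a = s + length mu" and b_eq: "b = s' + length nu"
    by (simp_all add: a_def b_def As_def Bs_def)
  have ss: "int s' - int s = dd" unfolding s_def s'_def si_def si'_def by auto
  have bak: "b = a + k"
  proof -
    have "int b = int a + int k" using ss a_eq b_eq unfolding dd_def by simp
    then show ?thesis by simp
  qed
  have alpha: "\<alpha> = - 1/2 + real s - real s'"
  proof -
    have "real_of_int (int s' - int s) = real_of_int dd" using ss by simp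
    then have "real s' - real s = real k + real (length mu) - real (length nu)" unfolding dd_def by simp
    then show ?thesis unfolding \<alpha>_def by simp
  qed
  have lamD: "lam = partition_of_maya ({n. n < 0} \<union> int ` D)"
    using Phi_eq[of mu nu k] unfolding lam D_def ys_def As_def Bs_def s_def s'_def si_def si'_def dd_def
    by simp
  have finD: "finite D" by (simp add: D_def)
  have distAs: "distinct As" unfolding As_def by (rule distinct_shifted[OF degvec_distinct[OF pm]])
  have distBs: "distinct Bs" unfolding Bs_def by (rule distinct_shifted[OF degvec_distinct[OF pn]])
  have dist_ys: "distinct (map dcol ys)"
  proof -
    have "distinct ys" unfolding ys_def using distAs distBs by (auto simp: distinct_map)
    then show ?thesis using inj_dcol by (simp add: distinct_map inj_on_def inj_def)
  qed
  have H1: "poly (He_part lam) y = hwr (map dcol ys) y" for y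
  proof -
    have "poly (He_part lam) y = hwr (degvec lam) y" by (rule He_part_hwr)
    also have "degvec lam = rev (map (\<lambda>d. d - tD D) (esD D))"
      unfolding lamD by (rule degvec_MD[OF finD])
    also have "hwr (rev (map (\<lambda>d. d - tD D) (esD D))) y = hwr (map (\<lambda>d. d - tD D) (esD D)) y"
      by (rule hwr_perm) simp
    also have "\<dots> = hwr ([0..<tD D] @ map (\<lambda>d. d + tD D) (map (\<lambda>d. d - tD D) (esD D))) y"
      by (rule hwr_shiftn[symmetric])
    also have "[0..<tD D] @ map (\<lambda>d. d + tD D) (map (\<lambda>d. d - tD D) (esD D)) = sorted_list_of_set D"
      by (rule slos_D[OF finD, symmetric])
    also have "hwr (sorted_list_of_set D) y = hwr (map dcol ys) y"
    proof (rule hwr_perm)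
      have "mset (sorted_list_of_set D) = mset_set D" by (metis mset_sorted_list_of_multiset sorted_list_of_mset_set)
      also have "mset_set D = mset (map dcol ys)" unfolding D_def by (rule mset_set_set[OF dist_ys])
      finally show "mset (sorted_list_of_set D) = mset (map dcol ys)" .
    qed
    finally show ?thesis .
  qed
  have SA: "2 * sum_list As = 2 * psize mu + a * (a - 1)"
    unfolding As_def a_eq by (rule sum_shifted)
  have SB: "2 * sum_list Bs = 2 * psize nu + b * (b - 1)"
    unfolding Bs_def b_eq by (rule sum_shifted)
  have KK: "2 * K = k * (k + 1)" unfolding K_def by (rule two_div_succ)
  have H2: "hwr (map dcol ys) y = 2 ^ (psize mu + psize nu) * y ^ K * LP (y\<^sup>2 / 2)" if y: "y > 0" for y
  proof -
    let ?z = "y\<^sup>2 / 2"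
    have z: "?z > 0" using y by simp
    have N: "length ys = a + b" by (simp add: ys_def a_def b_def)
    define P where "P = (a + b) * (a + b - 1) div 2"
    have PP: "2 * P = (a + b) * (a + b - 1)" unfolding P_def by (rule two_div_pred)
    have "hwr (map dcol ys) y = y ^ P * (\<Prod>j<length ys. kc (ys ! j)) / 2 ^ P * lrat (- 1/2) ys ?z"
      using hwr_lag[OF y, of ys] unfolding N P_def .
    also have "(\<Prod>j<length ys. kc (ys ! j)) = 2 ^ (sum_list As + sum_list Bs) * sqrt 2 ^ b"
      unfolding ys_def prod_kc b_def ..
    also have "lrat (- 1/2) ys ?z = LP ?z / ?z powr ((real a - 1/2) * real b)"
    proof -
      have e1: "lpg (- 1/2) As Bs ?z = ?z powr ((real a - 1/2) * real b) * lrat (- 1/2) ys ?z"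
        unfolding lpg_def ys_def a_def b_def by simp
      have "lpg (- 1/2) As Bs ?z = lpg (- 1/2 + real s) (degvec mu) Bs ?z"
      proof -
        have n0: "\<forall>k::int. - 1/2 \<noteq> (of_int k :: real)" using nonint_half[of 0] by simp
        show ?thesis unfolding As_def by (rule LS1n[OF n0 z])
      qed
      also have "\<dots> = lpg (- 1/2 + real s - real s') (degvec mu) (degvec nu) ?z"
        unfolding Bs_def by (rule LS2n[OF nonint_half z])
      also have "\<dots> = LP ?z"
        unfolding LP_def alpha by (rule laguerre_pair_lpg[OF z, symmetric])
      finally have e2: "lpg (- 1/2) As Bs ?z = LP ?z" .
      have "?z powr ((real a - 1/2) * real b) > 0" using z by simp
      then show ?thesis using e1 e2 by (simp add: field_simps)
    qed
    finally have "hwr (map dcol ys) y = y ^ P * (2 ^ (sum_list As + sum_list Bs) * sqrt 2 ^ b) / 2 ^ P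
        * (LP ?z / ?z powr ((real a - 1/2) * real b))" .
    also have "\<dots> = (y ^ P * (2 ^ (sum_list As + sum_list Bs) * sqrt 2 ^ b) / 2 ^ P / ?z powr ((real a - 1/2) * real b)) * LP ?z"
      by simp
    also have "y ^ P * (2 ^ (sum_list As + sum_list Bs) * sqrt 2 ^ b) / 2 ^ P / ?z powr ((real a - 1/2) * real b)
        = 2 ^ (psize mu + psize nu) * y ^ K"
      by (rule final_arith[OF y bak SA SB PP KK])
    finally show ?thesis .
  qed
  show ?thesis
  proof (cases "x > 0")
    case True
    show ?thesis unfolding H1 H2[OF True] LP_def \<alpha>_def K_def by (rule refl)
  next
    case False
    then have nx: "- x > 0" using x0 by simp
    let ?L = "map dcol ys"
    define E where "E = sum_list ?L + length ?L * (length ?L - 1) div 2"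
    have "hwr ?L x = hwr ?L (- (- x))" by simp
    also have "\<dots> = (-1) ^ E * hwr ?L (- x)" unfolding E_def by (rule hwr_neg)
    also have "hwr ?L (- x) = 2 ^ (psize mu + psize nu) * (- x) ^ K * LP ((- x)\<^sup>2 / 2)"
      by (rule H2[OF nx])
    finally have h0: "hwr ?L x = (-1) ^ E * (2 ^ (psize mu + psize nu) * (- x) ^ K * LP ((- x)\<^sup>2 / 2))" .
    have m: "(- x) ^ K = (-1) ^ K * x ^ K" by (rule power_minus)
    have sq: "(- x)\<^sup>2 = x\<^sup>2" by (rule power2_minus)
    have h: "hwr ?L x = ((-1) ^ E * (-1) ^ K) * (2 ^ (psize mu + psize nu) * x ^ K * LP (x\<^sup>2 / 2))"
      unfolding h0 m sq by (simp only: mult_ac)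
    have "even (E + K)"
    proof -
      define P where "P = (a + b) * (a + b - 1) div 2"
      have PP: "2 * P = (a + b) * (a + b - 1)" unfolding P_def by (rule two_div_pred)
      have "E = 2 * sum_list As + 2 * sum_list Bs + b + P"
        unfolding E_def P_def ys_def sum_dcol by (simp add: a_def b_def)
      moreover have "even (b + P + K)" by (rule parity_aux[OF bak PP KK])
      ultimately show ?thesis by simp
    qed
    then have one: "(-1::real) ^ E * (-1) ^ K = 1" by (simp add: power_add[symmetric])
    show ?thesis unfolding H1 h one unfolding LP_def \<alpha>_def K_def by (rule mult_1_left)
  qed
qed


end
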